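(* Let $N\ge1$ be an integer, $0<\delta,f\le1$, and let $\Omega$ be a positive-definite verification operator for $|\Psi\rangle$ with second largest eigenvalue $\beta$ and smallest eigenvalue $\tau$, $0<\tau\le\beta<1$. Let $h=[\min\{\beta\ln\beta^{-1},\tau\ln\tau^{-1}\}]^{-1}$. Then $$F(N,\delta,\Omega)\ge\frac{N+1-(\ln\beta)^{-1}\ln(\tau\delta)}{N+1-(\ln\beta)^{-1}\ln(\tau\delta)-h\ln(\tau\delta)},\qquad \mathcal F(N,f,\Omega)\ge\frac{N+1-(\ln\beta)^{-1}\ln f}{N+1-(\ln\beta)^{-1}\ln f-h\ln f}.$$
   Context: Let $\mathcal H$ be a Hilbert space of finite dimension $D\ge2$ and $|\Psi\rangle\in\mathcal H$ a unit vector. A verification operator for $|\Psi\rangle$ is a Hermitian operator $\Omega$ on $\mathcal H$ with $0\le\Omega\le1$, $\Omega|\Psi\rangle=|\Psi\rangle$, whose eigenvalue $1$ is nondegenerate. For a density operator $\rho$ on $\mathcal H^{\otimes(N+1)}$ put $p_\rho=\mathrm{tr}[(\Omega^{\otimes N}\otimes1)\rho]$, $f_\rho=\mathrm{tr}[(\Omega^{\otimes N}\otimes|\Psi\rangle\langle\Psi|)\rho]$. With minimization over permutation-invariant density operators on $\mathcal H^{\otimes(N+1)}$: $F(N,\delta,\Omega)=\min\{f_\rho/p_\rho:p_\rho\ge\delta\}$ and $\mathcal F(N,f,\Omega)=\min\{f_\rho/p_\rho:f_\rho\ge f\}$. *)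

theory Defs
  imports "Jordan_Normal_Form.Char_Poly" "HOL-Combinatorics.Permutations"
begin

text \<open>The space H^{tensor n} is identified with C^(D^n): a basis index a < D^n encodes the
  tuple of local indices (digit D 0 a, ..., digit D (n-1) a); factor k is tensor slot k.\<close>

definition mtrace :: "complex mat \<Rightarrow> complex" where
  "mtrace A = (\<Sum>i<dim_row A. A $$ (i, i))"

definition hermitian_mat :: "nat \<Rightarrow> complex mat \<Rightarrow> bool" where
  "hermitian_mat n A \<longleftrightarrow> A \<in> carrier_mat n n \<and>
     (\<forall>i<n. \<forall>j<n. A $$ (i, j) = cnj (A $$ (j, i)))"

definition psd_mat :: "nat \<Rightarrow> complex mat \<Rightarrow> bool" where
  "psd_mat n A \<longleftrightarrow> hermitian_mat n A \<and>
     (\<forall>v \<in> carrier_vec n. 0 \<le> Re ((A *\<^sub>v v) \<bullet>c v))"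

definition pd_mat :: "nat \<Rightarrow> complex mat \<Rightarrow> bool" where
  "pd_mat n A \<longleftrightarrow> hermitian_mat n A \<and>
     (\<forall>v \<in> carrier_vec n. v \<noteq> 0\<^sub>v n \<longrightarrow> 0 < Re ((A *\<^sub>v v) \<bullet>c v))"

definition density_op :: "nat \<Rightarrow> complex mat \<Rightarrow> bool" where
  "density_op n \<rho> \<longleftrightarrow> psd_mat n \<rho> \<and> mtrace \<rho> = 1"

definition verification_operator :: "nat \<Rightarrow> complex mat \<Rightarrow> complex vec \<Rightarrow> bool" where
  "verification_operator D \<Omega> \<Psi> \<longleftrightarrow>
     \<Psi> \<in> carrier_vec D \<and> \<Psi> \<bullet>c \<Psi> = 1 \<and>
     psd_mat D \<Omega> \<and> psd_mat D (1\<^sub>m D - \<Omega>) \<and>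
     \<Omega> *\<^sub>v \<Psi> = \<Psi> \<and>
     (\<forall>v \<in> carrier_vec D. \<Omega> *\<^sub>v v = v \<longrightarrow> (\<exists>c. v = c \<cdot>\<^sub>v \<Psi>))"

definition digit :: "nat \<Rightarrow> nat \<Rightarrow> nat \<Rightarrow> nat" where
  "digit D k a = a div D ^ k mod D"

text \<open>Omega^{tensor N} tensor P on H^{tensor (N+1)} (P in the last slot, index N).\<close>
definition tensor_last :: "nat \<Rightarrow> nat \<Rightarrow> complex mat \<Rightarrow> complex mat \<Rightarrow> complex mat" where
  "tensor_last D N \<Omega> P = mat (D ^ (N + 1)) (D ^ (N + 1))
     (\<lambda>(a, b). (\<Prod>k<N. \<Omega> $$ (digit D k a, digit D k b)) * P $$ (digit D N a, digit D N b))"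

definition proj :: "nat \<Rightarrow> complex vec \<Rightarrow> complex mat" where
  "proj D \<Psi> = mat D D (\<lambda>(i, j). \<Psi> $ i * cnj (\<Psi> $ j))"

text \<open>Permutation of tensor slots acting on basis indices.\<close>
definition perm_index :: "nat \<Rightarrow> nat \<Rightarrow> (nat \<Rightarrow> nat) \<Rightarrow> nat \<Rightarrow> nat" where
  "perm_index D n \<pi> a = (\<Sum>k<n. digit D (\<pi> k) a * D ^ k)"

definition perm_invariant :: "nat \<Rightarrow> nat \<Rightarrow> complex mat \<Rightarrow> bool" where
  "perm_invariant D n \<rho> \<longleftrightarrow>
     (\<forall>\<pi>. \<pi> permutes {..<n} \<longrightarrow>
        (\<forall>a < D ^ n. \<forall>b < D ^ n. \<rho> $$ (perm_index D n \<pi> a, perm_index D n \<pi> b) = \<rho> $$ (a, b)))"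

definition p_val :: "nat \<Rightarrow> nat \<Rightarrow> complex mat \<Rightarrow> complex mat \<Rightarrow> real" where
  "p_val D N \<Omega> \<rho> = Re (mtrace (tensor_last D N \<Omega> (1\<^sub>m D) * \<rho>))"

definition f_val :: "nat \<Rightarrow> nat \<Rightarrow> complex mat \<Rightarrow> complex vec \<Rightarrow> complex mat \<Rightarrow> real" where
  "f_val D N \<Omega> \<Psi> \<rho> = Re (mtrace (tensor_last D N \<Omega> (proj D \<Psi>) * \<rho>))"

definition admissible :: "nat \<Rightarrow> nat \<Rightarrow> complex mat \<Rightarrow> bool" where
  "admissible D N \<rho> \<longleftrightarrow> density_op (D ^ (N + 1)) \<rho> \<and> perm_invariant D (N + 1) \<rho>"

end

theory Submission
  imports Defs "Jordan_Normal_Form.Schur_Decomposition"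
begin

lemma digit_lt: "0 < D \<Longrightarrow> digit D k a < D"
  by (simp add: digit_def)

lemma digit_Suc: "digit D (Suc k) a = digit D k (a div D)"
  by (simp add: digit_def div_mult2_eq mult.commute)

lemma digit_0: "digit D 0 a = a mod D"
  by (simp add: digit_def)

lemma digits_repr: "0 < D \<Longrightarrow> a < D ^ n \<Longrightarrow> a = (\<Sum>k<n. digit D k a * D ^ k)"
proof (induction n arbitrary: a)
  case 0 then show ?case by simp
next
  case (Suc n)
  have "a div D < D ^ n" using Suc.prems by (simp add: less_mult_imp_div_less mult.commute)
  hence IH: "a div D = (\<Sum>k<n. digit D k (a div D) * D ^ k)" using Suc by blast
  have "(\<Sum>k<Suc n. digit D k a * D ^ k) = a mod D + (\<Sum>k<n. digit D (Suc k) a * D ^ Suc k)"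
    by (subst sum.lessThan_Suc_shift) (simp add: digit_0)
  also have "(\<Sum>k<n. digit D (Suc k) a * D ^ Suc k) = D * (\<Sum>k<n. digit D k (a div D) * D ^ k)"
    using Suc.prems by (simp add: digit_Suc sum_distrib_left mult_ac)
  also have "\<dots> = D * (a div D)" using IH by simp
  finally show ?case by simp
qed

lemma repr_lt: "(\<forall>k<n. f k < (D::nat)) \<Longrightarrow> (\<Sum>k<n. f k * D ^ k) < D ^ n"
proof (induction n arbitrary: f)
  case 0 then show ?case by simp
next
  case (Suc n)
  have IH: "(\<Sum>k<n. f (Suc k) * D ^ k) < D ^ n" using Suc by auto
  have "(\<Sum>k<Suc n. f k * D ^ k) = f 0 + D * (\<Sum>k<n. f (Suc k) * D ^ k)"
    by (subst sum.lessThan_Suc_shift) (simp add: sum_distrib_left mult_ac)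
  also have "\<dots> < D + D * (\<Sum>k<n. f (Suc k) * D ^ k)"
    using Suc.prems by simp
  also have "\<dots> = D * ((\<Sum>k<n. f (Suc k) * D ^ k) + 1)" by (simp add: algebra_simps)
  also have "\<dots> \<le> D * D ^ n" using IH by (intro mult_le_mono2) simp
  finally show ?case by simp
qed

lemma digit_repr: "(\<forall>k<n. f k < D) \<Longrightarrow> j < n \<Longrightarrow> digit D j (\<Sum>k<n. f k * D ^ k) = f j"
proof (induction n arbitrary: f j)
  case 0 then show ?case by simp
next
  case (Suc n)
  have D: "0 < D" using Suc.prems by auto
  have eq: "(\<Sum>k<Suc n. f k * D ^ k) = f 0 + D * (\<Sum>k<n. f (Suc k) * D ^ k)"
    by (subst sum.lessThan_Suc_shift) (simp add: sum_distrib_left mult_ac)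
  show ?case
  proof (cases j)
    case 0
    then show ?thesis using Suc.prems unfolding eq by (simp add: digit_0)
  next
    case (Suc j')
    have "digit D j (\<Sum>k<Suc n. f k * D ^ k) = digit D j' ((f 0 + D * (\<Sum>k<n. f (Suc k) * D ^ k)) div D)"
      using Suc unfolding eq by (simp add: digit_Suc)
    also have "(f 0 + D * (\<Sum>k<n. f (Suc k) * D ^ k)) div D = (\<Sum>k<n. f (Suc k) * D ^ k)"
      using Suc.prems D by simp
    also have "digit D j' \<dots> = f (Suc j')" using Suc.IH[of "\<lambda>k. f (Suc k)" j'] Suc.prems Suc by auto
    finally show ?thesis using Suc by simp
  qed
qed

lemma digits_inj: "0 < D \<Longrightarrow> a < D ^ n \<Longrightarrow> b < D ^ n \<Longrightarrow> (\<forall>k<n. digit D k a = digit D k b) \<Longrightarrow> a = b"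
  by (metis (no_types, lifting) digits_repr sum.cong lessThan_iff)

lemma perm_index_lt: "0 < D \<Longrightarrow> perm_index D n \<pi> a < D ^ n"
  unfolding perm_index_def by (rule repr_lt) (simp add: digit_lt)

lemma digit_perm_index: "0 < D \<Longrightarrow> j < n \<Longrightarrow> digit D j (perm_index D n \<pi> a) = digit D (\<pi> j) a"
  unfolding perm_index_def by (rule digit_repr) (auto simp: digit_lt)

lemma perm_index_bij:
  assumes D: "0 < D" and p: "\<pi> permutes {..<n}"
  shows "bij_betw (perm_index D n \<pi>) {..<D^n} {..<D^n}"
proof -
  have inj: "inj_on (perm_index D n \<pi>) {..<D^n}"
  proof (rule inj_onI)
    fix a b assume a: "a \<in> {..<D^n}" and b: "b \<in> {..<D^n}" and e: "perm_index D n \<pi> a = perm_index D n \<pi> b"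
    have "\<forall>k<n. digit D k a = digit D k b"
    proof (intro allI impI)
      fix k assume k: "k < n"
      obtain j where j: "j < n" "\<pi> j = k" using p k
        by (metis lessThan_iff permutes_def)
      have "digit D (\<pi> j) a = digit D (\<pi> j) b"
        using digit_perm_index[OF D j(1), of \<pi> a] digit_perm_index[OF D j(1), of \<pi> b] e by simp
      thus "digit D k a = digit D k b" using j by simp
    qed
    thus "a = b" using digits_inj[OF D] a b by auto
  qed
  have "perm_index D n \<pi> ` {..<D^n} = {..<D^n}"
    by (rule endo_inj_surj) (use inj perm_index_lt[OF D] in auto)
  thus ?thesis using inj by (simp add: bij_betw_def)
qed

lemma cscalar_sum: "v \<in> carrier_vec n \<Longrightarrow> w \<in> carrier_vec n \<Longrightarrow> v \<bullet>c w = (\<Sum>x<n. v $ x * cnj (w $ x))"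
  by (simp add: scalar_prod_def atLeast0LessThan)

lemma mult_mat_vec_index_sum: "A \<in> carrier_mat n m \<Longrightarrow> v \<in> carrier_vec m \<Longrightarrow> x < n \<Longrightarrow>
   (A *\<^sub>v v) $ x = (\<Sum>y<m. A $$ (x, y) * v $ y)"
  by (auto simp: scalar_prod_def atLeast0LessThan row_def)

lemma mat_mult_index_sum: "A \<in> carrier_mat n m \<Longrightarrow> B \<in> carrier_mat m k \<Longrightarrow> x < n \<Longrightarrow> y < k \<Longrightarrow>
   (A * B) $$ (x, y) = (\<Sum>z<m. A $$ (x, z) * B $$ (z, y))"
  by (auto simp: scalar_prod_def atLeast0LessThan row_def col_def)

definition adj :: "complex mat \<Rightarrow> complex mat" where
  "adj A = mat (dim_col A) (dim_row A) (\<lambda>(i, j). cnj (A $$ (j, i)))"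

lemma adj_carrier[simp]: "A \<in> carrier_mat n m \<Longrightarrow> adj A \<in> carrier_mat m n"
  by (simp add: adj_def)

lemma adj_dims[simp]: "dim_row (adj A) = dim_col A" "dim_col (adj A) = dim_row A"
  by (simp_all add: adj_def)

lemma adj_index[simp]: "i < dim_col A \<Longrightarrow> j < dim_row A \<Longrightarrow> adj A $$ (i, j) = cnj (A $$ (j, i))"
  by (simp add: adj_def)

lemma adj_mult: assumes A: "A \<in> carrier_mat n m" and B: "B \<in> carrier_mat m k"
  shows "adj (A * B) = adj B * adj A"
proof (rule eq_matI)
  fix i j assume ij: "i < dim_row (adj B * adj A)" "j < dim_col (adj B * adj A)"
  hence i: "i < k" and j: "j < n" using A B by auto
  have "adj (A * B) $$ (i, j) = cnj ((A * B) $$ (j, i))" using A B i j by simp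
  also have "\<dots> = (\<Sum>z<m. cnj (A $$ (j, z)) * cnj (B $$ (z, i)))"
    by (subst mat_mult_index_sum[OF A B j i]) (simp add: cnj_sum)
  also have "\<dots> = (\<Sum>z<m. adj B $$ (i, z) * adj A $$ (z, j))"
    by (intro sum.cong refl) (use A B i j in \<open>simp add: mult.commute\<close>)
  also have "\<dots> = (adj B * adj A) $$ (i, j)"
    by (rule mat_mult_index_sum[OF adj_carrier[OF B] adj_carrier[OF A] i j, symmetric])
  finally show "adj (A * B) $$ (i, j) = (adj B * adj A) $$ (i, j)" .
next
  show "dim_row (adj (A * B)) = dim_row (adj B * adj A)" using A B by simp
next
  show "dim_col (adj (A * B)) = dim_col (adj B * adj A)" using A B by simp
qed

lemma hermitian_adj: assumes H: "hermitian_mat n A" shows "adj A = A"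
proof -
  have A: "A \<in> carrier_mat n n" and h: "\<And>i j. i < n \<Longrightarrow> j < n \<Longrightarrow> A $$ (i, j) = cnj (A $$ (j, i))"
    using H unfolding hermitian_mat_def by blast+
  show ?thesis
  proof (rule eq_matI)
    fix i j assume "i < dim_row A" "j < dim_col A"
    hence ij: "i < n" "j < n" using A by auto
    show "adj A $$ (i, j) = A $$ (i, j)" using A ij h[OF ij] by simp
  qed (use A in simp_all)
qed

lemma trace_comm: assumes "A \<in> carrier_mat n m" "B \<in> carrier_mat m n"
  shows "mtrace (A * B) = mtrace (B * A)"
proof -
  have "mtrace (A * B) = (\<Sum>i<n. \<Sum>z<m. A $$ (i, z) * B $$ (z, i))"
    unfolding mtrace_def using assms by (intro sum.cong) (auto simp del: index_mult_mat simp add: index_mult_mat(2,3) mat_mult_index_sum[OF assms])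
  also have "\<dots> = (\<Sum>z<m. \<Sum>i<n. B $$ (z, i) * A $$ (i, z))"
    by (subst sum.swap) (simp add: mult.commute)
  also have "\<dots> = mtrace (B * A)"
    unfolding mtrace_def using assms by (intro sum.cong) (auto simp del: index_mult_mat simp add: index_mult_mat(2,3) mat_mult_index_sum[OF assms(2,1)])
  finally show ?thesis .
qed

lemma self_cscalar: "v \<in> carrier_vec n \<Longrightarrow> v \<bullet>c v = complex_of_real (\<Sum>x<n. (cmod (v $ x))\<^sup>2)"
proof -
  assume v: "v \<in> carrier_vec n"
  have "v \<bullet>c v = (\<Sum>x<n. v $ x * cnj (v $ x))" using cscalar_sum[OF v v] .
  also have "\<dots> = (\<Sum>x<n. complex_of_real ((cmod (v $ x))\<^sup>2))"
    by (intro sum.cong refl) (use complex_norm_square[of "v $ x" for x] in simp)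
  finally show ?thesis by simp
qed

lemma self_cscalar_pos: assumes "v \<in> carrier_vec n" "v \<noteq> 0\<^sub>v n"
  shows "(\<Sum>x<n. (cmod (v $ x))\<^sup>2) > 0"
proof -
  obtain x where x: "x < n" "v $ x \<noteq> 0" using assms by (metis carrier_vecD eq_vecI index_zero_vec)
  have "(cmod (v $ x))\<^sup>2 \<le> (\<Sum>x<n. (cmod (v $ x))\<^sup>2)"
    using x by (intro member_le_sum) auto
  moreover have "(cmod (v $ x))\<^sup>2 > 0" using x by simp
  ultimately show ?thesis by linarith
qed

lemma cscalar_mult_left: assumes A: "A \<in> carrier_mat n n" and v: "v \<in> carrier_vec n" and w: "w \<in> carrier_vec n"
  shows "(A *\<^sub>v v) \<bullet>c w = (\<Sum>x<n. \<Sum>y<n. A $$ (x, y) * v $ y * cnj (w $ x))"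
proof -
  have "(A *\<^sub>v v) \<bullet>c w = (\<Sum>x<n. (A *\<^sub>v v) $ x * cnj (w $ x))"
    using A v w by (intro cscalar_sum) auto
  also have "\<dots> = (\<Sum>x<n. (\<Sum>y<n. A $$ (x, y) * v $ y) * cnj (w $ x))"
    by (intro sum.cong refl) (simp add: mult_mat_vec_index_sum[OF A v])
  also have "\<dots> = (\<Sum>x<n. \<Sum>y<n. A $$ (x, y) * v $ y * cnj (w $ x))"
    by (simp add: sum_distrib_right)
  finally show ?thesis .
qed

lemma cscalar_mult_right: assumes A: "A \<in> carrier_mat n n" and v: "v \<in> carrier_vec n" and w: "w \<in> carrier_vec n"
  shows "v \<bullet>c (A *\<^sub>v w) = (\<Sum>x<n. \<Sum>y<n. v $ x * cnj (A $$ (x, y)) * cnj (w $ y))"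
proof -
  have "v \<bullet>c (A *\<^sub>v w) = (\<Sum>x<n. v $ x * cnj ((A *\<^sub>v w) $ x))"
    using A v w by (intro cscalar_sum) auto
  also have "\<dots> = (\<Sum>x<n. v $ x * cnj (\<Sum>y<n. A $$ (x, y) * w $ y))"
    by (intro sum.cong refl) (simp add: mult_mat_vec_index_sum[OF A w])
  also have "\<dots> = (\<Sum>x<n. \<Sum>y<n. v $ x * cnj (A $$ (x, y)) * cnj (w $ y))"
    by (simp add: sum_distrib_left cnj_sum mult_ac)
  finally show ?thesis .
qed

lemma hermitian_cscalar: assumes A: "A \<in> carrier_mat n n" and H: "hermitian_mat n A"
  and v: "v \<in> carrier_vec n" and w: "w \<in> carrier_vec n"
  shows "(A *\<^sub>v v) \<bullet>c w = v \<bullet>c (A *\<^sub>v w)"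
proof -
  have "(A *\<^sub>v v) \<bullet>c w = (\<Sum>x<n. \<Sum>y<n. A $$ (x, y) * v $ y * cnj (w $ x))"
    by (rule cscalar_mult_left[OF A v w])
  also have "\<dots> = (\<Sum>y<n. \<Sum>x<n. A $$ (x, y) * v $ y * cnj (w $ x))"
    by (rule sum.swap)
  also have "\<dots> = (\<Sum>y<n. \<Sum>x<n. v $ y * cnj (A $$ (y, x)) * cnj (w $ x))"
  proof (intro sum.cong refl)
    fix x y assume "x \<in> {..<n}" "y \<in> {..<n}"
    hence "A $$ (x, y) = cnj (A $$ (y, x))" using H unfolding hermitian_mat_def by blast
    thus "A $$ (x, y) * v $ y * cnj (w $ x) = v $ y * cnj (A $$ (y, x)) * cnj (w $ x)" by simp
  qed
  also have "\<dots> = v \<bullet>c (A *\<^sub>v w)"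
    by (rule cscalar_mult_right[OF A v w, symmetric])
  finally show ?thesis .
qed

lemma cscalar_smult_left: "v \<in> carrier_vec n \<Longrightarrow> w \<in> carrier_vec n \<Longrightarrow> (c \<cdot>\<^sub>v v) \<bullet>c w = c * (v \<bullet>c w)"
  by (simp add: cscalar_sum sum_distrib_left mult_ac)

lemma cscalar_smult_right: "v \<in> carrier_vec n \<Longrightarrow> w \<in> carrier_vec n \<Longrightarrow> v \<bullet>c (c \<cdot>\<^sub>v w) = cnj c * (v \<bullet>c w)"
  by (simp add: cscalar_sum sum_distrib_left mult_ac)

lemma cscalar_cnj: "v \<in> carrier_vec n \<Longrightarrow> w \<in> carrier_vec n \<Longrightarrow> cnj (v \<bullet>c w) = w \<bullet>c v"
  by (simp add: cscalar_sum cnj_sum mult.commute)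

lemma hermitian_eig_real: assumes A: "A \<in> carrier_mat n n" and H: "hermitian_mat n A"
  and v: "v \<in> carrier_vec n" "v \<noteq> 0\<^sub>v n" and e: "A *\<^sub>v v = r \<cdot>\<^sub>v v"
  shows "cnj r = r"
proof -
  have eq: "(A *\<^sub>v v) \<bullet>c v = v \<bullet>c (A *\<^sub>v v)" by (rule hermitian_cscalar[OF A H v(1) v(1)])
  have l: "(A *\<^sub>v v) \<bullet>c v = r * (v \<bullet>c v)" unfolding e by (rule cscalar_smult_left[OF v(1) v(1)])
  have r: "v \<bullet>c (A *\<^sub>v v) = cnj r * (v \<bullet>c v)" unfolding e by (rule cscalar_smult_right[OF v(1) v(1)])
  have "v \<bullet>c v \<noteq> 0" using self_cscalar_pos[OF v] unfolding self_cscalar[OF v(1)] of_real_eq_0_iff by linarith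
  thus ?thesis using eq l r by simp
qed

lemma smult_mat_vec: "A \<in> carrier_mat n m \<Longrightarrow> v \<in> carrier_vec m \<Longrightarrow> (c \<cdot>\<^sub>m A) *\<^sub>v v = c \<cdot>\<^sub>v (A *\<^sub>v v)"
proof -
  assume A: "A \<in> carrier_mat n m" and v: "v \<in> carrier_vec m"
  have cA: "c \<cdot>\<^sub>m A \<in> carrier_mat n m" using A by simp
  show ?thesis
  proof (rule eq_vecI)
    fix i assume "i < dim_vec (c \<cdot>\<^sub>v (A *\<^sub>v v))"
    hence i: "i < n" using A by simp
    show "((c \<cdot>\<^sub>m A) *\<^sub>v v) $ i = (c \<cdot>\<^sub>v (A *\<^sub>v v)) $ i"
      unfolding mult_mat_vec_index_sum[OF cA v i] using i A v
      by (simp add: mult_mat_vec_index_sum[OF A v i] sum_distrib_left mult.assoc)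
  qed (use A in simp)
qed

lemma mtrace_add: "A \<in> carrier_mat n n \<Longrightarrow> B \<in> carrier_mat n n \<Longrightarrow> mtrace (A + B) = mtrace A + mtrace B"
  by (simp add: mtrace_def sum.distrib)
lemma mtrace_minus: "A \<in> carrier_mat n n \<Longrightarrow> B \<in> carrier_mat n n \<Longrightarrow> mtrace (A - B) = mtrace A - mtrace B"
  by (simp add: mtrace_def sum_subtractf)
lemma mtrace_smult: "A \<in> carrier_mat n n \<Longrightarrow> mtrace (c \<cdot>\<^sub>m A) = c * mtrace A"
  by (simp add: mtrace_def sum_distrib_left)

lemma spectral_step:
  fixes A :: "complex mat" and lam :: "nat \<Rightarrow> real"
  assumes A: "A \<in> carrier_mat n n" and H: "hermitian_mat n A" and k: "k < n"
    and cs: "\<forall>i<k. cs i \<in> carrier_vec n"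
    and on: "\<forall>i<k. \<forall>j<k. cs i \<bullet>c cs j = (if i = j then 1 else 0)"
    and ev: "\<forall>i<k. A *\<^sub>v cs i = complex_of_real (lam i) \<cdot>\<^sub>v cs i"
  shows "\<exists>w e. w \<in> carrier_vec n \<and> w \<noteq> 0\<^sub>v n \<and> (\<forall>i<k. w \<bullet>c cs i = 0) \<and> A *\<^sub>v w = e \<cdot>\<^sub>v w"
proof -
  define U where "U = mat n k (\<lambda>(x, i). cs i $ x)"
  define V where "V = adj U"
  define L where "L = mat k k (\<lambda>(i, j). if i = j then complex_of_real (lam i) else 0)"
  define P where "P = U * V"
  have U: "U \<in> carrier_mat n k" by (simp add: U_def)
  have V: "V \<in> carrier_mat k n" by (simp add: V_def U_def)
  have L: "L \<in> carrier_mat k k" by (simp add: L_def)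
  have P: "P \<in> carrier_mat n n" using U V by (simp add: P_def)
  have VU: "V * U = 1\<^sub>m k"
  proof (rule eq_matI)
    fix i j assume "i < dim_row (1\<^sub>m k)" "j < dim_col (1\<^sub>m k)"
    hence ij: "i < k" "j < k" by auto
    have "(V * U) $$ (i, j) = (\<Sum>x<n. cnj (cs i $ x) * cs j $ x)"
      using ij by (subst mat_mult_index_sum[OF V U]) (auto simp: V_def U_def)
    also have "\<dots> = cs j \<bullet>c cs i" using cs ij by (subst cscalar_sum[of _ n]) (auto simp: mult.commute)
    also have "\<dots> = 1\<^sub>m k $$ (i, j)" using on ij by auto
    finally show "(V * U) $$ (i, j) = 1\<^sub>m k $$ (i, j)" .
  qed (use V U in auto)
  have AU: "A * U = U * L"
  proof (rule eq_matI)
    fix x j assume "x < dim_row (U * L)" "j < dim_col (U * L)"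
    hence xj: "x < n" "j < k" using U L by auto
    have "(A * U) $$ (x, j) = (\<Sum>y<n. A $$ (x, y) * cs j $ y)"
      using xj by (subst mat_mult_index_sum[OF A U]) (auto simp: U_def)
    also have "\<dots> = (A *\<^sub>v cs j) $ x" using xj cs by (subst mult_mat_vec_index_sum[OF A]) auto
    also have "\<dots> = complex_of_real (lam j) * cs j $ x" using ev xj cs by auto
    also have "\<dots> = (\<Sum>i<k. U $$ (x, i) * L $$ (i, j))"
      using xj by (simp add: U_def L_def if_distrib[of "\<lambda>t. _ * t"] mult.commute cong: if_cong)
    also have "\<dots> = (U * L) $$ (x, j)" using xj by (subst mat_mult_index_sum[OF U L]) auto
    finally show "(A * U) $$ (x, j) = (U * L) $$ (x, j)" .
  qed (use A U L in auto)
  have adjL: "adj L = L" by (intro eq_matI) (auto simp: L_def)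
  have VA: "V * A = L * V"
  proof -
    have "V * A = adj (A * U)" using adj_mult[OF A U] hermitian_adj[OF H] by (simp add: V_def)
    also have "\<dots> = adj (U * L)" using AU by simp
    also have "\<dots> = L * V" using adj_mult[OF U L] adjL by (simp add: V_def)
    finally show ?thesis .
  qed
  have AP: "A * P = P * A"
  proof -
    have "A * P = (A * U) * V" using A U V by (simp add: P_def assoc_mult_mat)
    also have "\<dots> = U * (L * V)" using AU U L V by (simp add: assoc_mult_mat)
    also have "\<dots> = U * (V * A)" using VA by simp
    also have "\<dots> = P * A" using A U V by (simp add: P_def assoc_mult_mat)
    finally show ?thesis .
  qed
  have PP: "P * P = P"
  proof -
    have "P * P = U * (V * (U * V))" using U V by (simp add: P_def assoc_mult_mat[of U n k V n "U * V" n])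
    also have "\<dots> = U * ((V * U) * V)" using U V by (simp add: assoc_mult_mat[of V k n U k V n])
    finally show ?thesis using VU U V by (simp add: P_def)
  qed
  have VP: "V * P = V"
  proof -
    have "V * P = (V * U) * V" using U V by (simp add: P_def assoc_mult_mat[of V k n U k V n])
    thus ?thesis using VU V by simp
  qed
  have trP: "mtrace P = of_nat k"
    using trace_comm[OF U V] VU by (simp add: P_def mtrace_def)
  have trAP: "Im (mtrace (A * P)) = 0"
  proof -
    have "A * P = (A * U) * V" unfolding P_def by (rule assoc_mult_mat[OF A U V, symmetric])
    also have "\<dots> = U * (L * V)" unfolding AU by (rule assoc_mult_mat[OF U L V])
    finally have "mtrace (A * P) = mtrace (U * (L * V))" by simp
    also have "\<dots> = mtrace ((L * V) * U)" using U L V by (intro trace_comm) auto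
    also have "\<dots> = mtrace L" using U L V VU by (simp add: assoc_mult_mat)
    finally show ?thesis by (simp add: mtrace_def L_def)
  qed
  have trA: "Im (mtrace A) = 0"
  proof -
    have "\<forall>i<n. Im (A $$ (i, i)) = 0"
    proof (intro allI impI)
      fix i assume "i < n"
      hence "A $$ (i, i) = cnj (A $$ (i, i))" using H unfolding hermitian_mat_def by blast
      from arg_cong[OF this, of Im] show "Im (A $$ (i, i)) = 0" by simp
    qed
    thus ?thesis using A by (simp add: mtrace_def)
  qed
  define C where "C = A - A * P + \<i> \<cdot>\<^sub>m P"
  have C: "C \<in> carrier_mat n n" using A P by (simp add: C_def)
  have trC: "Im (mtrace C) = of_nat k"
  proof -
    have c1: "A - A * P \<in> carrier_mat n n" and c2: "\<i> \<cdot>\<^sub>m P \<in> carrier_mat n n" using A P by auto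
    have "mtrace C = mtrace (A - A * P) + mtrace (\<i> \<cdot>\<^sub>m P)" unfolding C_def by (rule mtrace_add[OF c1 c2])
    also have "mtrace (A - A * P) = mtrace A - mtrace (A * P)" by (rule mtrace_minus) (use A P in auto)
    also have "mtrace (\<i> \<cdot>\<^sub>m P) = \<i> * mtrace P" by (rule mtrace_smult[OF P])
    finally have "mtrace C = mtrace A - mtrace (A * P) + \<i> * mtrace P" .
    thus ?thesis using trA trAP trP by simp
  qed
  obtain es where es: "char_poly C = (\<Prod>a\<leftarrow>es. [:- a, 1:])" "length es = n"
    using char_poly_factorized[OF C] by blast
  obtain B P' Q' where sd: "schur_decomposition C es = (B, P', Q')" by (cases "schur_decomposition C es")
  from schur_decomposition[OF C es(1) sd]
  have sim: "similar_mat_wit C B P' Q'" and dB: "diag_mat B = es" by auto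
  hence B: "B \<in> carrier_mat n n" and P': "P' \<in> carrier_mat n n" and Q': "Q' \<in> carrier_mat n n"
    and QP: "Q' * P' = 1\<^sub>m n" and CB: "C = P' * B * Q'"
    using C unfolding similar_mat_wit_def Let_def by auto
  have "mtrace C = mtrace (P' * (B * Q'))" using CB B P' Q' by (simp add: assoc_mult_mat)
  also have "\<dots> = mtrace ((B * Q') * P')" using B P' Q' by (intro trace_comm) auto
  also have "\<dots> = mtrace B" using B P' Q' QP by (simp add: assoc_mult_mat)
  also have "\<dots> = sum_list es"
  proof -
    have "sum_list es = sum_list (map (\<lambda>i. B $$ (i, i)) [0..<n])" using dB B by (simp add: diag_mat_def)
    also have "\<dots> = (\<Sum>i<n. B $$ (i, i))" by (simp add: interv_sum_list_conv_sum_set_nat atLeast0LessThan)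
    finally show ?thesis using B by (simp add: mtrace_def)
  qed
  finally have trCes: "mtrace C = sum_list es" .
  have "\<exists>e\<in>set es. e \<noteq> \<i>"
  proof (rule ccontr)
    assume "\<not> ?thesis"
    hence "replicate (length es) \<i> = es" by (intro replicate_length_same) auto
    hence "sum_list es = of_nat n * \<i>" using es(2) by (metis sum_list_replicate)
    hence "Im (mtrace C) = of_nat n" using trCes by simp
    thus False using trC k by simp
  qed
  then obtain e where e: "e \<in> set es" "e \<noteq> \<i>" by blast
  have "eigenvalue C e" using eigenvalue_root_char_poly[OF C] es(1) linear_poly_root[OF e(1)] by simp
  then obtain w where w: "w \<in> carrier_vec n" "w \<noteq> 0\<^sub>v n" "C *\<^sub>v w = e \<cdot>\<^sub>v w"
    unfolding eigenvalue_def eigenvector_def using C by auto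
  have PC: "P * C = \<i> \<cdot>\<^sub>m P"
  proof -
    have c1: "A - A * P \<in> carrier_mat n n" and c2: "\<i> \<cdot>\<^sub>m P \<in> carrier_mat n n"
      and c3: "A * P \<in> carrier_mat n n" using A P by auto
    have "P * C = P * (A - A * P) + P * (\<i> \<cdot>\<^sub>m P)"
      unfolding C_def by (rule mult_add_distrib_mat[OF P c1 c2])
    also have "P * (A - A * P) = P * A - P * (A * P)" by (rule mult_minus_distrib_mat[OF P A c3])
    finally have "P * C = P * A - P * (A * P) + P * (\<i> \<cdot>\<^sub>m P)" .
    also have "P * (A * P) = A * P"
      using A P AP PP by (metis assoc_mult_mat)
    also have "P * (\<i> \<cdot>\<^sub>m P) = \<i> \<cdot>\<^sub>m P" using P PP by (simp add: mult_smult_distrib)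
    finally have "P * C = P * A - P * A + \<i> \<cdot>\<^sub>m P" using AP by simp
    also have "P * A - P * A = 0\<^sub>m n n" using A P by (intro minus_r_inv_mat) simp
    finally show ?thesis using P by simp
  qed
  have "P *\<^sub>v (C *\<^sub>v w) = (P * C) *\<^sub>v w" by (rule assoc_mult_mat_vec[OF P C w(1), symmetric])
  also have "\<dots> = \<i> \<cdot>\<^sub>v (P *\<^sub>v w)" unfolding PC by (rule smult_mat_vec[OF P w(1)])
  finally have "\<i> \<cdot>\<^sub>v (P *\<^sub>v w) = P *\<^sub>v (C *\<^sub>v w)" ..
  also have "\<dots> = e \<cdot>\<^sub>v (P *\<^sub>v w)" unfolding w(3) by (rule mult_mat_vec[OF P w(1)])
  finally have eq: "\<i> \<cdot>\<^sub>v (P *\<^sub>v w) = e \<cdot>\<^sub>v (P *\<^sub>v w)" .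
  have Pw: "P *\<^sub>v w = 0\<^sub>v n"
  proof (rule eq_vecI)
    fix i assume "i < dim_vec (0\<^sub>v n :: complex vec)"
    hence i: "i < n" by simp
    have "\<i> * (P *\<^sub>v w) $ i = e * (P *\<^sub>v w) $ i"
      using arg_cong[OF eq, of "\<lambda>v. v $ i"] i P by simp
    hence "(\<i> - e) * (P *\<^sub>v w) $ i = 0" by (simp add: algebra_simps)
    thus "(P *\<^sub>v w) $ i = 0\<^sub>v n $ i" using e(2) i by simp
  qed (use P in simp)
  have c1: "A - A * P \<in> carrier_mat n n" and c2: "\<i> \<cdot>\<^sub>m P \<in> carrier_mat n n"
    and c3: "A * P \<in> carrier_mat n n" using A P by auto
  have "C *\<^sub>v w = (A - A * P) *\<^sub>v w + (\<i> \<cdot>\<^sub>m P) *\<^sub>v w"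
    unfolding C_def by (rule add_mult_distrib_mat_vec[OF c1 c2 w(1)])
  also have "(A - A * P) *\<^sub>v w = A *\<^sub>v w - (A * P) *\<^sub>v w" by (rule minus_mult_distrib_mat_vec[OF A c3 w(1)])
  also have "(A * P) *\<^sub>v w = A *\<^sub>v (P *\<^sub>v w)" by (rule assoc_mult_mat_vec[OF A P w(1)])
  also have "(\<i> \<cdot>\<^sub>m P) *\<^sub>v w = \<i> \<cdot>\<^sub>v (P *\<^sub>v w)" by (rule smult_mat_vec[OF P w(1)])
  finally have "C *\<^sub>v w = A *\<^sub>v w - A *\<^sub>v 0\<^sub>v n + \<i> \<cdot>\<^sub>v 0\<^sub>v n" unfolding Pw .
  also have "\<dots> = A *\<^sub>v w" using A w(1) by (intro eq_vecI) auto
  finally have "C *\<^sub>v w = A *\<^sub>v w" .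
  hence Aw: "A *\<^sub>v w = e \<cdot>\<^sub>v w" using w(3) by simp
  have "V *\<^sub>v w = (V * P) *\<^sub>v w" using VP by simp
  also have "\<dots> = V *\<^sub>v (P *\<^sub>v w)" by (rule assoc_mult_mat_vec[OF V P w(1)])
  also have "\<dots> = 0\<^sub>v k" unfolding Pw using V by (intro eq_vecI) auto
  finally have Vw: "V *\<^sub>v w = 0\<^sub>v k" .
  have orth: "\<forall>i<k. w \<bullet>c cs i = 0"
  proof (intro allI impI)
    fix i assume i: "i < k"
    have "w \<bullet>c cs i = (\<Sum>x<n. w $ x * cnj (cs i $ x))" using cs i w(1) by (intro cscalar_sum) auto
    also have "\<dots> = (V *\<^sub>v w) $ i"
      using i by (subst mult_mat_vec_index_sum[OF V w(1) i]) (auto simp: V_def U_def mult.commute)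
    finally show "w \<bullet>c cs i = 0" using Vw i by simp
  qed
  show ?thesis using w(1,2) orth Aw by blast
qed

lemma spectral_inv:
  fixes A :: "complex mat"
  assumes A: "A \<in> carrier_mat n n" and H: "hermitian_mat n A"
  shows "k \<le> n \<Longrightarrow> \<exists>cs (lam :: nat \<Rightarrow> real). (\<forall>i<k. cs i \<in> carrier_vec n) \<and>
     (\<forall>i<k. \<forall>j<k. cs i \<bullet>c cs j = (if i = j then 1 else 0)) \<and>
     (\<forall>i<k. A *\<^sub>v cs i = complex_of_real (lam i) \<cdot>\<^sub>v cs i)"
proof (induction k)
  case 0
  then show ?case by auto
next
  case (Suc k)
  then obtain cs and lam :: "nat \<Rightarrow> real" where cs: "\<forall>i<k. cs i \<in> carrier_vec n"
    and on: "\<forall>i<k. \<forall>j<k. cs i \<bullet>c cs j = (if i = j then 1 else 0)"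
    and ev: "\<forall>i<k. A *\<^sub>v cs i = complex_of_real (lam i) \<cdot>\<^sub>v cs i" by auto
  have k: "k < n" using Suc by simp
  obtain w e where w: "w \<in> carrier_vec n" "w \<noteq> 0\<^sub>v n" and orth: "\<forall>i<k. w \<bullet>c cs i = 0"
    and Aw: "A *\<^sub>v w = e \<cdot>\<^sub>v w"
    using spectral_step[OF A H k cs on ev] by blast
  have ce: "cnj e = e" by (rule hermitian_eig_real[OF A H w Aw])
  hence e: "e = complex_of_real (Re e)" by (metis Reals_cnj_iff complex_is_Real_iff of_real_Re)
  define s where "s = (\<Sum>x<n. (cmod (w $ x))\<^sup>2)"
  have s: "s > 0" unfolding s_def by (rule self_cscalar_pos[OF w])
  have ww: "w \<bullet>c w = complex_of_real s" unfolding s_def by (rule self_cscalar[OF w(1)])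
  define c where "c = complex_of_real (1 / sqrt s)"
  define u where "u = c \<cdot>\<^sub>v w"
  have u: "u \<in> carrier_vec n" using w by (simp add: u_def)
  have uu: "u \<bullet>c u = 1"
  proof -
    have "u \<bullet>c u = c * cnj c * (w \<bullet>c w)" unfolding u_def
      using w by (simp add: cscalar_smult_left[of _ n] cscalar_smult_right[of _ n])
    also have "\<dots> = 1" unfolding ww c_def using s
      by (simp add: of_real_mult[symmetric] del: of_real_mult)
    finally show ?thesis .
  qed
  have uorth: "\<forall>i<k. u \<bullet>c cs i = 0" using orth cs w
    by (auto simp: u_def cscalar_smult_left[of _ n])
  have uorth2: "\<forall>i<k. cs i \<bullet>c u = 0"
    using uorth cs u by (metis cscalar_cnj complex_cnj_zero)
  have Au: "A *\<^sub>v u = complex_of_real (Re e) \<cdot>\<^sub>v u"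
    unfolding u_def using A w Aw e by (simp add: mult_mat_vec smult_smult_assoc mult.commute)
  define cs' where "cs' = cs(k := u)"
  define lam' where "lam' = lam(k := Re e)"
  have "\<forall>i<Suc k. cs' i \<in> carrier_vec n" using cs u by (auto simp: cs'_def less_Suc_eq)
  moreover have "\<forall>i<Suc k. \<forall>j<Suc k. cs' i \<bullet>c cs' j = (if i = j then 1 else 0)"
    using on uu uorth uorth2 by (auto simp: cs'_def less_Suc_eq)
  moreover have "\<forall>i<Suc k. A *\<^sub>v cs' i = complex_of_real (lam' i) \<cdot>\<^sub>v cs' i"
    using ev Au by (auto simp: cs'_def lam'_def less_Suc_eq)
  ultimately show ?case by blast
qed

lemma spectral_decomp:
  fixes A :: "complex mat"
  assumes A: "A \<in> carrier_mat n n" and H: "hermitian_mat n A"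
  shows "\<exists>cs (lam :: nat \<Rightarrow> real). (\<forall>i<n. cs i \<in> carrier_vec n) \<and>
     (\<forall>i<n. \<forall>j<n. cs i \<bullet>c cs j = (if i = j then 1 else 0)) \<and>
     (\<forall>i<n. A *\<^sub>v cs i = complex_of_real (lam i) \<cdot>\<^sub>v cs i) \<and>
     (\<forall>x<n. \<forall>y<n. (\<Sum>i<n. cs i $ x * cnj (cs i $ y)) = (if x = y then 1 else 0)) \<and>
     (\<forall>x<n. \<forall>y<n. A $$ (x, y) = (\<Sum>i<n. complex_of_real (lam i) * (cs i $ x * cnj (cs i $ y))))"
proof -
  obtain cs and lam :: "nat \<Rightarrow> real" where cs: "\<forall>i<n. cs i \<in> carrier_vec n"
    and on: "\<forall>i<n. \<forall>j<n. cs i \<bullet>c cs j = (if i = j then 1 else 0)"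
    and ev: "\<forall>i<n. A *\<^sub>v cs i = complex_of_real (lam i) \<cdot>\<^sub>v cs i"
    using spectral_inv[OF A H, of n] by auto
  define U where "U = mat n n (\<lambda>(x, i). cs i $ x)"
  define V where "V = adj U"
  have U: "U \<in> carrier_mat n n" by (simp add: U_def)
  have V: "V \<in> carrier_mat n n" by (simp add: V_def U_def)
  have VU: "V * U = 1\<^sub>m n"
  proof (rule eq_matI)
    fix i j assume "i < dim_row (1\<^sub>m n)" "j < dim_col (1\<^sub>m n)"
    hence ij: "i < n" "j < n" by auto
    have "(V * U) $$ (i, j) = (\<Sum>x<n. cnj (cs i $ x) * cs j $ x)"
      using ij by (subst mat_mult_index_sum[OF V U]) (auto simp: V_def U_def)
    also have "\<dots> = cs j \<bullet>c cs i" using cs ij by (subst cscalar_sum[of _ n]) (auto simp: mult.commute)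
    also have "\<dots> = 1\<^sub>m n $$ (i, j)" using on ij by auto
    finally show "(V * U) $$ (i, j) = 1\<^sub>m n $$ (i, j)" .
  qed (use V U in auto)
  have UV: "U * V = 1\<^sub>m n" by (rule mat_mult_left_right_inverse[OF V U VU])
  have compl: "\<forall>x<n. \<forall>y<n. (\<Sum>i<n. cs i $ x * cnj (cs i $ y)) = (if x = y then 1 else 0)"
  proof (intro allI impI)
    fix x y assume xy: "x < n" "y < n"
    have "(\<Sum>i<n. cs i $ x * cnj (cs i $ y)) = (U * V) $$ (x, y)"
      using xy by (subst mat_mult_index_sum[OF U V]) (auto simp: V_def U_def)
    thus "(\<Sum>i<n. cs i $ x * cnj (cs i $ y)) = (if x = y then 1 else 0)" using UV xy by simp
  qed
  have dec: "\<forall>x<n. \<forall>y<n. A $$ (x, y) = (\<Sum>i<n. complex_of_real (lam i) * (cs i $ x * cnj (cs i $ y)))"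
  proof (intro allI impI)
    fix x y assume xy: "x < n" "y < n"
    have "(\<Sum>i<n. complex_of_real (lam i) * (cs i $ x * cnj (cs i $ y)))
        = (\<Sum>i<n. (A *\<^sub>v cs i) $ x * cnj (cs i $ y))"
      using ev cs xy by (intro sum.cong refl) auto
    also have "\<dots> = (\<Sum>i<n. (\<Sum>z<n. A $$ (x, z) * cs i $ z) * cnj (cs i $ y))"
      using cs xy by (intro sum.cong refl) (simp add: mult_mat_vec_index_sum[OF A])
    also have "\<dots> = (\<Sum>z<n. A $$ (x, z) * (\<Sum>i<n. cs i $ z * cnj (cs i $ y)))"
      by (simp add: sum_distrib_left sum_distrib_right mult_ac) (rule sum.swap)
    also have "\<dots> = (\<Sum>z<n. A $$ (x, z) * (if z = y then 1 else 0))"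
      using compl xy by (intro sum.cong refl) auto
    also have "\<dots> = A $$ (x, y)" using xy by (simp add: if_distrib cong: if_cong)
    finally show "A $$ (x, y) = (\<Sum>i<n. complex_of_real (lam i) * (cs i $ x * cnj (cs i $ y)))" ..
  qed
  show ?thesis using cs on ev compl dec by blast
qed

definition vc :: "nat \<Rightarrow> nat \<Rightarrow> (nat \<Rightarrow> complex vec) \<Rightarrow> (nat \<Rightarrow> nat) \<Rightarrow> complex vec" where
  "vc D n cs c = vec (D ^ n) (\<lambda>a. \<Prod>k<n. cs (c k) $ digit D k a)"

definition rc :: "nat \<Rightarrow> nat \<Rightarrow> (nat \<Rightarrow> complex vec) \<Rightarrow> complex mat \<Rightarrow> (nat \<Rightarrow> nat) \<Rightarrow> complex" where
  "rc D n cs \<rho> c = (\<rho> *\<^sub>v vc D n cs c) \<bullet>c vc D n cs c"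

lemma vc_carrier[simp]: "vc D n cs c \<in> carrier_vec (D ^ n)"
  by (simp add: vc_def)

lemma vc_index: "a < D ^ n \<Longrightarrow> vc D n cs c $ a = (\<Prod>k<n. cs (c k) $ digit D k a)"
  by (simp add: vc_def)

lemma rc_sum: assumes "\<rho> \<in> carrier_mat (D ^ n) (D ^ n)"
  shows "rc D n cs \<rho> c = (\<Sum>b<D ^ n. \<Sum>a<D ^ n. \<rho> $$ (b, a) * vc D n cs c $ a * cnj (vc D n cs c $ b))"
proof -
  have "rc D n cs \<rho> c = (\<Sum>b<D ^ n. (\<rho> *\<^sub>v vc D n cs c) $ b * cnj (vc D n cs c $ b))"
    unfolding rc_def using assms by (intro cscalar_sum) auto
  also have "\<dots> = (\<Sum>b<D ^ n. (\<Sum>a<D ^ n. \<rho> $$ (b, a) * vc D n cs c $ a) * cnj (vc D n cs c $ b))"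
    by (intro sum.cong refl) (simp add: mult_mat_vec_index_sum[OF assms])
  also have "\<dots> = (\<Sum>b<D ^ n. \<Sum>a<D ^ n. \<rho> $$ (b, a) * vc D n cs c $ a * cnj (vc D n cs c $ b))"
    by (simp add: sum_distrib_right)
  finally show ?thesis .
qed

abbreviation cfg :: "nat \<Rightarrow> nat \<Rightarrow> (nat \<Rightarrow> nat) set" where
  "cfg D n \<equiv> PiE {..<n} (\<lambda>_. {..<D})"

lemma tensor_entry:
  fixes \<mu>O \<mu>X :: "nat \<Rightarrow> complex"
  assumes D: "0 < D"
    and O: "\<forall>x<D. \<forall>y<D. \<Omega> $$ (x, y) = (\<Sum>i<D. \<mu>O i * (cs i $ x * cnj (cs i $ y)))"
    and X: "\<forall>x<D. \<forall>y<D. X $$ (x, y) = (\<Sum>i<D. \<mu>X i * (cs i $ x * cnj (cs i $ y)))"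
    and a: "a < D ^ Suc N" and b: "b < D ^ Suc N"
  shows "tensor_last D N \<Omega> X $$ (a, b) = (\<Sum>c\<in>cfg D (Suc N).
     ((\<Prod>k<N. \<mu>O (c k)) * \<mu>X (c N)) * (vc D (Suc N) cs c $ a * cnj (vc D (Suc N) cs c $ b)))"
proof -
  define \<mu> where "\<mu> = (\<lambda>k. if k < N then \<mu>O else \<mu>X)"
  define E where "E = (\<lambda>k i. cs i $ digit D k a * cnj (cs i $ digit D k b))"
  have "tensor_last D N \<Omega> X $$ (a, b) = (\<Prod>k<N. \<Omega> $$ (digit D k a, digit D k b)) * X $$ (digit D N a, digit D N b)"
    using a b by (simp add: tensor_last_def)
  also have "\<dots> = (\<Prod>k<Suc N. \<Sum>i<D. \<mu> k i * E k i)"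
    using O X by (simp add: \<mu>_def E_def digit_lt[OF D])
  also have "\<dots> = (\<Sum>c\<in>cfg D (Suc N). \<Prod>k<Suc N. \<mu> k (c k) * E k (c k))"
    by (rule prod_sum_PiE) auto
  also have "\<dots> = (\<Sum>c\<in>cfg D (Suc N).
     ((\<Prod>k<N. \<mu>O (c k)) * \<mu>X (c N)) * (vc D (Suc N) cs c $ a * cnj (vc D (Suc N) cs c $ b)))"
  proof (intro sum.cong refl)
    fix c
    have "(\<Prod>k<Suc N. \<mu> k (c k) * E k (c k)) = (\<Prod>k<Suc N. \<mu> k (c k)) * (\<Prod>k<Suc N. E k (c k))"
      by (rule prod.distrib)
    also have "(\<Prod>k<Suc N. \<mu> k (c k)) = (\<Prod>k<N. \<mu>O (c k)) * \<mu>X (c N)"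
      by (simp add: \<mu>_def)
    also have "(\<Prod>k<Suc N. E k (c k)) = vc D (Suc N) cs c $ a * cnj (vc D (Suc N) cs c $ b)"
      using a b by (simp add: E_def vc_index prod.distrib cnj_prod)
    finally show "(\<Prod>k<Suc N. \<mu> k (c k) * E k (c k)) = ((\<Prod>k<N. \<mu>O (c k)) * \<mu>X (c N)) * (vc D (Suc N) cs c $ a * cnj (vc D (Suc N) cs c $ b))" .
  qed
  finally show ?thesis .
qed

lemma tensor_last_carrier[simp]: "tensor_last D N \<Omega> X \<in> carrier_mat (D ^ Suc N) (D ^ Suc N)"
  by (simp add: tensor_last_def)

lemma trace_expand:
  fixes \<mu>O \<mu>X :: "nat \<Rightarrow> complex"
  assumes D: "0 < D"
    and O: "\<forall>x<D. \<forall>y<D. \<Omega> $$ (x, y) = (\<Sum>i<D. \<mu>O i * (cs i $ x * cnj (cs i $ y)))"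
    and X: "\<forall>x<D. \<forall>y<D. X $$ (x, y) = (\<Sum>i<D. \<mu>X i * (cs i $ x * cnj (cs i $ y)))"
    and r: "\<rho> \<in> carrier_mat (D ^ Suc N) (D ^ Suc N)"
  shows "mtrace (tensor_last D N \<Omega> X * \<rho>) = (\<Sum>c\<in>cfg D (Suc N).
     ((\<Prod>k<N. \<mu>O (c k)) * \<mu>X (c N)) * rc D (Suc N) cs \<rho> c)"
proof -
  define M where "M = D ^ Suc N"
  define w where "w = (\<lambda>c. (\<Prod>k<N. \<mu>O (c k)) * \<mu>X (c N))"
  define v where "v = (\<lambda>c. vc D (Suc N) cs c)"
  have T: "tensor_last D N \<Omega> X \<in> carrier_mat M M" unfolding M_def by (rule tensor_last_carrier)
  have r': "\<rho> \<in> carrier_mat M M" using r unfolding M_def .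
  have "mtrace (tensor_last D N \<Omega> X * \<rho>) = (\<Sum>a<M. \<Sum>b<M. tensor_last D N \<Omega> X $$ (a, b) * \<rho> $$ (b, a))"
    unfolding mtrace_def using T r' by (intro sum.cong) (auto simp del: index_mult_mat simp add: index_mult_mat(2,3) mat_mult_index_sum[OF T r'])
  also have "\<dots> = (\<Sum>a<M. \<Sum>b<M. \<Sum>c\<in>cfg D (Suc N). w c * (\<rho> $$ (b, a) * v c $ a * cnj (v c $ b)))"
    by (intro sum.cong refl) (simp add: tensor_entry[OF D O X] M_def w_def v_def sum_distrib_right sum_distrib_left mult_ac)
  also have "\<dots> = (\<Sum>c\<in>cfg D (Suc N). \<Sum>b<M. \<Sum>a<M. w c * (\<rho> $$ (b, a) * v c $ a * cnj (v c $ b)))"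
    by (subst sum.swap, subst (2) sum.swap, subst sum.swap) (rule refl)
  also have "\<dots> = (\<Sum>c\<in>cfg D (Suc N). w c * rc D (Suc N) cs \<rho> c)"
    by (intro sum.cong refl) (simp add: rc_sum[OF r] M_def v_def sum_distrib_left)
  finally show ?thesis by (simp add: w_def)
qed

lemma tensor_last_one: assumes D: "0 < D"
  shows "tensor_last D N (1\<^sub>m D) (1\<^sub>m D) = 1\<^sub>m (D ^ Suc N)"
proof (rule eq_matI)
  fix a b assume "a < dim_row (1\<^sub>m (D ^ Suc N))" "b < dim_col (1\<^sub>m (D ^ Suc N))"
  hence a: "a < D ^ Suc N" and b: "b < D ^ Suc N" by auto
  have "tensor_last D N (1\<^sub>m D) (1\<^sub>m D) $$ (a, b) = (\<Prod>k<Suc N. if digit D k a = digit D k b then 1 else 0)"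
    using a b by (simp add: tensor_last_def digit_lt[OF D])
  also have "\<dots> = (if (\<forall>k<Suc N. digit D k a = digit D k b) then 1 else 0)"
    by (induction N) (auto simp: less_Suc_eq)
  also have "\<dots> = 1\<^sub>m (D ^ Suc N) $$ (a, b)"
    using digits_inj[OF D a b] a b by auto
  finally show "tensor_last D N (1\<^sub>m D) (1\<^sub>m D) $$ (a, b) = 1\<^sub>m (D ^ Suc N) $$ (a, b)" .
qed (auto simp: tensor_last_def)

lemma sum_rc:
  assumes D: "0 < D"
    and compl: "\<forall>x<D. \<forall>y<D. (\<Sum>i<D. cs i $ x * cnj (cs i $ y)) = (if x = y then 1 else 0)"
    and r: "\<rho> \<in> carrier_mat (D ^ Suc N) (D ^ Suc N)"
  shows "(\<Sum>c\<in>cfg D (Suc N). rc D (Suc N) cs \<rho> c) = mtrace \<rho>"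
proof -
  have I: "\<forall>x<D. \<forall>y<D. 1\<^sub>m D $$ (x, y) = (\<Sum>i<D. (\<lambda>_. 1) i * (cs i $ x * cnj (cs i $ y)))"
    using compl by simp
  have "mtrace (tensor_last D N (1\<^sub>m D) (1\<^sub>m D) * \<rho>) = (\<Sum>c\<in>cfg D (Suc N). rc D (Suc N) cs \<rho> c)"
    using trace_expand[OF D I I r] by simp
  moreover have "tensor_last D N (1\<^sub>m D) (1\<^sub>m D) * \<rho> = \<rho>"
    unfolding tensor_last_one[OF D] using r by simp
  ultimately show ?thesis by simp
qed

lemma vc_perm_index:
  assumes D: "0 < D" and s: "\<sigma> permutes {..<n}" and a: "a < D ^ n"
  shows "vc D n cs c $ (perm_index D n (Hilbert_Choice.inv \<sigma>) a) = vc D n cs (c \<circ> \<sigma>) $ a"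
proof -
  have t: "Hilbert_Choice.inv \<sigma> permutes {..<n}" using s by (rule permutes_inv)
  have "vc D n cs c $ (perm_index D n (Hilbert_Choice.inv \<sigma>) a) = (\<Prod>k<n. cs (c k) $ digit D (Hilbert_Choice.inv \<sigma> k) a)"
    using perm_index_lt[OF D] by (simp add: vc_index digit_perm_index[OF D])
  also have "\<dots> = (\<Prod>k<n. (\<lambda>j. cs (c (\<sigma> j)) $ digit D j a) (Hilbert_Choice.inv \<sigma> k))"
    using permutes_inverses(1)[OF s] by simp
  also have "\<dots> = (\<Prod>j<n. cs (c (\<sigma> j)) $ digit D j a)"
    using prod.permute[OF t, of "\<lambda>j. cs (c (\<sigma> j)) $ digit D j a"] by (simp add: comp_def)
  also have "\<dots> = vc D n cs (c \<circ> \<sigma>) $ a" using a by (simp add: vc_index)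
  finally show ?thesis .
qed

lemma double_reindex: assumes bij: "bij_betw p S S"
  shows "(\<Sum>b\<in>S. \<Sum>a\<in>S. F (p b) (p a)) = (\<Sum>b\<in>S. \<Sum>a\<in>S. F b a)"
proof -
  have "(\<Sum>b\<in>S. \<Sum>a\<in>S. F (p b) (p a)) = (\<Sum>b\<in>S. \<Sum>a\<in>S. F (p b) a)"
    by (rule sum.cong[OF refl], rule sum.reindex_bij_betw[OF bij])
  also have "\<dots> = (\<Sum>b\<in>S. \<Sum>a\<in>S. F b a)"
    by (rule sum.reindex_bij_betw[OF bij, of "\<lambda>b. \<Sum>a\<in>S. F b a"])
  finally show ?thesis .
qed

lemma rc_perm:
  assumes D: "0 < D" and s: "\<sigma> permutes {..<n}" and pi: "perm_invariant D n \<rho>"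
    and r: "\<rho> \<in> carrier_mat (D ^ n) (D ^ n)"
  shows "rc D n cs \<rho> (c \<circ> \<sigma>) = rc D n cs \<rho> c"
proof -
  define t where "t = Hilbert_Choice.inv \<sigma>"
  have t: "t permutes {..<n}" unfolding t_def using s by (rule permutes_inv)
  define p where "p = perm_index D n t"
  have bij: "bij_betw p {..<D ^ n} {..<D ^ n}" unfolding p_def by (rule perm_index_bij[OF D t])
  have rinv: "\<And>a b. a < D ^ n \<Longrightarrow> b < D ^ n \<Longrightarrow>
     \<rho> $$ (perm_index D n (Hilbert_Choice.inv \<sigma>) b, perm_index D n (Hilbert_Choice.inv \<sigma>) a) = \<rho> $$ (b, a)"
    using pi t unfolding perm_invariant_def t_def by blast
  have "rc D n cs \<rho> c = (\<Sum>b<D ^ n. \<Sum>a<D ^ n. \<rho> $$ (b, a) * vc D n cs c $ a * cnj (vc D n cs c $ b))"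
    by (rule rc_sum[OF r])
  also have "\<dots> = (\<Sum>b<D ^ n. \<Sum>a<D ^ n. \<rho> $$ (p b, p a) * vc D n cs c $ (p a) * cnj (vc D n cs c $ (p b)))"
    by (rule double_reindex[OF bij, of "\<lambda>b a. \<rho> $$ (b, a) * vc D n cs c $ a * cnj (vc D n cs c $ b)", symmetric])
  also have "\<dots> = (\<Sum>b<D ^ n. \<Sum>a<D ^ n. \<rho> $$ (b, a) * vc D n cs (c \<circ> \<sigma>) $ a * cnj (vc D n cs (c \<circ> \<sigma>) $ b))"
    by (intro sum.cong refl) (simp add: rinv p_def t_def vc_perm_index[OF D s])
  also have "\<dots> = rc D n cs \<rho> (c \<circ> \<sigma>)" by (rule rc_sum[OF r, symmetric])
  finally show ?thesis ..
qed

lemma xlnx_deriv: "0 < x \<Longrightarrow> ((\<lambda>x. x * ln (1 / x)) has_real_derivative (- ln x - 1)) (at x)"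
proof -
  assume x: "0 < x"
  have "((\<lambda>x. x * ln (1 / x)) has_real_derivative (1 * ln (1 / x) + x * (1 / (1 / x) * (- 1 / x ^ 2)))) (at x)"
    using x by (intro derivative_eq_intros DERIV_ln_divide) (auto intro!: derivative_eq_intros simp: power2_eq_square)
  moreover have "1 * ln (1 / x) + x * (1 / (1 / x) * (- 1 / x ^ 2)) = - ln x - 1"
    using x ln_div[of 1 x] by (simp add: power2_eq_square)
  ultimately show ?thesis by simp
qed

lemma xlnx_inc: assumes "0 < (u::real)" "u \<le> v" "v \<le> exp (-1)"
  shows "u * ln (1 / u) \<le> v * ln (1 / v)"
proof -
  have "(\<lambda>x. x * ln (1 / x)) u \<le> (\<lambda>x. x * ln (1 / x)) v"
  proof (rule DERIV_nonneg_imp_nondecreasing[of u v])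
  fix x assume x: "u \<le> x" "x \<le> v"
  hence x0: "0 < x" using assms by simp
  have "ln x \<le> -1" using x assms x0 by (metis exp_le_cancel_iff exp_ln order.trans)
  thus "\<exists>y. ((\<lambda>x. x * ln (1 / x)) has_real_derivative y) (at x) \<and> 0 \<le> y"
    using xlnx_deriv[OF x0] by auto
qed (use assms in auto)
  thus ?thesis by simp
qed

lemma xlnx_dec: assumes "exp (-1) \<le> (u::real)" "u \<le> v"
  shows "v * ln (1 / v) \<le> u * ln (1 / u)"
proof -
  have "(\<lambda>x. x * ln (1 / x)) v \<le> (\<lambda>x. x * ln (1 / x)) u"
  proof (rule DERIV_nonpos_imp_nonincreasing[of u v])
  fix x assume x: "u \<le> x" "x \<le> v"
  hence x0: "0 < x" using assms by (meson exp_gt_zero less_le_trans order.trans)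
  have "-1 \<le> ln x" using x assms x0 by (metis exp_le_cancel_iff exp_ln order.trans)
  thus "\<exists>y. ((\<lambda>x. x * ln (1 / x)) has_real_derivative y) (at x) \<and> y \<le> 0"
    using xlnx_deriv[OF x0] by auto
qed (use assms in auto)
  thus ?thesis by simp
qed

lemma xlnx_min: assumes "0 < (\<tau>::real)" "\<tau> \<le> x" "x \<le> \<beta>"
  shows "min (\<tau> * ln (1 / \<tau>)) (\<beta> * ln (1 / \<beta>)) \<le> x * ln (1 / x)"
proof (cases "x \<le> exp (-1)")
  case True
  then show ?thesis using xlnx_inc[OF assms(1,2) True] by (metis min.coboundedI1)
next
  case False
  then show ?thesis using xlnx_dec[of x \<beta>] assms by (metis min.coboundedI2 linorder_not_le order_less_imp_le)
qed

lemma slot_ineq: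
  fixes B b h c0 \<Lambda> x \<tau> \<beta> :: real
  assumes B: "0 \<le> B" "B \<le> 1" and b: "b = ln (1 / \<beta>)" and bpos: "0 < b"
    and hx: "\<forall>y. \<tau> \<le> y \<and> y \<le> \<beta> \<longrightarrow> 1 \<le> h * (y * ln (1 / y))"
    and c0: "c0 = (1 - B) / b + B * h" and L: "0 < \<Lambda>" and tau: "0 < \<tau>"
    and x: "x = 1 \<or> (\<tau> \<le> x \<and> x \<le> \<beta>)" and \<beta>1: "\<beta> < 1"
  shows "(\<Lambda> / x) * (if x = 1 then 1 else 0) - B * (\<Lambda> / x) \<ge> \<Lambda> * ((1 - B) - c0 * ln (1 / x))"
proof (cases "x = 1")
  case True
  then show ?thesis by (simp add: algebra_simps)
next
  case False
  hence xr: "\<tau> \<le> x" "x \<le> \<beta>" using x by auto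
  have x0: "0 < x" using xr tau by simp
  define l where "l = ln (1 / x)"
  have lb: "b \<le> l" unfolding l_def b using xr x0 by (simp add: ln_div)
  have hl: "1 \<le> h * (x * l)" using hx xr unfolding l_def by blast
  have t1: "(1 - B) * (1 - l / b) \<le> 0"
    using B lb bpos by (intro mult_nonneg_nonpos) (auto simp: field_simps)
  have t2: "B / x \<le> B * h * l"
  proof -
    have "B * 1 \<le> B * (h * (x * l))" using B hl by (intro mult_left_mono) auto
    hence "B \<le> B * h * l * x" by (simp add: mult_ac)
    thus ?thesis using x0 by (simp add: divide_le_eq)
  qed
  have "(1 - B) - c0 * l = (1 - B) * (1 - l / b) - B * h * l"
    unfolding c0 using bpos by (simp add: field_simps)
  also have "\<dots> \<le> - (B / x)" using t1 t2 by linarith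
  finally have "(1 - B) - c0 * l \<le> - (B / x)" .
  hence "\<Lambda> * ((1 - B) - c0 * l) \<le> \<Lambda> * (- (B / x))" using L by (intro mult_left_mono) auto
  thus ?thesis using False unfolding l_def by (simp add: field_simps)
qed

lemma tangent_sum:
  fixes R y :: "'c \<Rightarrow> real"
  assumes fin: "finite S" and R: "\<forall>c\<in>S. 0 \<le> R c" and Rs: "sum R S = 1"
    and y: "\<forall>c\<in>S. 0 < y c" and yb: "exp (- a) \<le> (\<Sum>c\<in>S. R c * y c)"
  shows "0 \<le> (\<Sum>c\<in>S. R c * (y c * (a + ln (y c))))"
proof -
  define m where "m = (\<Sum>c\<in>S. R c * y c)"
  have m0: "0 < m" using yb unfolding m_def by (meson exp_gt_zero less_le_trans)
  have lm: "- a \<le> ln m" using yb m0 unfolding m_def by (metis exp_le_cancel_iff exp_ln)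
  have tan: "\<And>c. c \<in> S \<Longrightarrow> y c * ln m + y c - m \<le> y c * ln (y c)"
  proof -
    fix c assume c: "c \<in> S"
    have yc: "0 < y c" using y c by auto
    have "ln (m / y c) \<le> m / y c - 1" using m0 yc by (intro ln_le_minus_one) auto
    hence "y c * ln (m / y c) \<le> y c * (m / y c - 1)" using yc by (intro mult_left_mono) auto
    moreover have "y c * (m / y c - 1) = m - y c" using yc by (simp add: field_simps)
    moreover have "y c * ln (m / y c) = y c * ln m - y c * ln (y c)"
      using yc m0 by (simp add: ln_div right_diff_distrib)
    ultimately show "y c * ln m + y c - m \<le> y c * ln (y c)" by linarith
  qed
  have "(\<Sum>c\<in>S. R c * (y c * ln m + y c - m)) \<le> (\<Sum>c\<in>S. R c * (y c * ln (y c)))"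
    using tan R by (intro sum_mono mult_left_mono) auto
  moreover have "(\<Sum>c\<in>S. R c * (y c * ln m + y c - m)) = m * ln m + m - m"
  proof -
    have e1: "\<And>c. R c * (y c * ln m + y c - m) = ln m * (R c * y c) + R c * y c - m * R c"
      by (simp add: algebra_simps)
    have "(\<Sum>c\<in>S. R c * (y c * ln m + y c - m)) = (\<Sum>c\<in>S. ln m * (R c * y c)) + (\<Sum>c\<in>S. R c * y c) - (\<Sum>c\<in>S. m * R c)"
      by (simp only: e1 sum.distrib sum_subtractf)
    also have "\<dots> = ln m * m + m - m * 1" by (simp only: sum_distrib_left[symmetric] m_def Rs)
    finally show ?thesis by simp
  qed
  ultimately have "m * ln m \<le> (\<Sum>c\<in>S. R c * (y c * ln (y c)))" by simp
  moreover have "(\<Sum>c\<in>S. R c * (y c * (a + ln (y c)))) = a * m + (\<Sum>c\<in>S. R c * (y c * ln (y c)))"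
    by (simp add: algebra_simps sum.distrib m_def sum_distrib_left)
  moreover have "0 \<le> a * m + m * ln m"
  proof -
    have "0 \<le> m * (a + ln m)" using m0 lm by simp
    thus ?thesis by (simp add: algebra_simps)
  qed
  ultimately show ?thesis by linarith
qed

lemma cfg_swap: assumes c: "c \<in> cfg D (Suc N)" and j: "j < Suc N"
  shows "c \<circ> Transposition.transpose j N \<in> cfg D (Suc N)"
  using c j by (auto simp: PiE_iff transpose_def extensional_def)

lemma sym_sum:
  fixes R G :: "(nat \<Rightarrow> nat) \<Rightarrow> real"
  assumes j: "j < Suc N" and Rs: "\<forall>c\<in>cfg D (Suc N). R (c \<circ> Transposition.transpose j N) = R c"
  shows "(\<Sum>c\<in>cfg D (Suc N). R c * G c) = (\<Sum>c\<in>cfg D (Suc N). R c * G (c \<circ> Transposition.transpose j N))"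
proof -
  let ?t = "Transposition.transpose j N"
  have inv: "\<And>c. c \<circ> ?t \<circ> ?t = c" by (rule ext) simp
  have "(\<Sum>c\<in>cfg D (Suc N). R c * G c) = (\<Sum>c\<in>cfg D (Suc N). R (c \<circ> ?t) * G (c \<circ> ?t))"
    by (rule sum.reindex_bij_witness[where i = "\<lambda>c. c \<circ> ?t" and j = "\<lambda>c. c \<circ> ?t"])
       (auto simp: comp_assoc cfg_swap[OF _ j])
  also have "\<dots> = (\<Sum>c\<in>cfg D (Suc N). R c * G (c \<circ> ?t))"
    using Rs by (intro sum.cong refl) auto
  finally show ?thesis .
qed

lemma transpose_image: assumes j: "j < Suc N"
  shows "Transposition.transpose j N ` {..<N} = {..<Suc N} - {j}"
proof -
  let ?t = "Transposition.transpose j N"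
  have p: "?t permutes {..<Suc N}" using j by (intro permutes_swap_id) auto
  have "{..<N} = {..<Suc N} - {N}" by auto
  hence "?t ` {..<N} = ?t ` {..<Suc N} - ?t ` {N}"
    by (metis image_set_diff permutes_inj[OF p])
  also have "?t ` {..<Suc N} = {..<Suc N}" by (rule permutes_image[OF p])
  finally show ?thesis by simp
qed

lemma prod_swap: assumes j: "j < Suc N"
  shows "(\<Prod>k<N. g ((c \<circ> Transposition.transpose j N) k)) = (\<Prod>k\<in>{..<Suc N} - {j}. g (c k))"
proof -
  let ?t = "Transposition.transpose j N"
  have "(\<Prod>k\<in>{..<Suc N} - {j}. g (c k)) = (\<Prod>k\<in>?t ` {..<N}. g (c k))"
    using transpose_image[OF j] by simp
  also have "\<dots> = (\<Prod>k<N. g (c (?t k)))"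
    by (subst prod.reindex) (auto intro: inj_on_subset[OF inj_transpose])
  finally show ?thesis by simp
qed

lemma main_abstract:
  fixes R :: "(nat \<Rightarrow> nat) \<Rightarrow> real" and lam :: "nat \<Rightarrow> real" and \<tau> \<beta> a b h B :: real
  assumes D: "0 < D" and i0: "i0 < D" "lam i0 = 1"
    and lr: "\<forall>i<D. i \<noteq> i0 \<longrightarrow> \<tau> \<le> lam i \<and> lam i \<le> \<beta>"
    and tb: "0 < \<tau>" "\<tau> \<le> \<beta>" "\<beta> < 1"
    and Rnn: "\<forall>c\<in>cfg D (Suc N). 0 \<le> R c" and Rsum: "sum R (cfg D (Suc N)) = 1"
    and Rsym: "\<forall>j<Suc N. \<forall>c\<in>cfg D (Suc N). R (c \<circ> Transposition.transpose j N) = R c"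
    and b: "b = ln (1 / \<beta>)" and h: "h = 1 / min (\<beta> * ln (1 / \<beta>)) (\<tau> * ln (1 / \<tau>))"
    and a: "0 \<le> a" and Bdef: "B = (real (Suc N) - a / b) / (real (Suc N) - a / b + h * a)"
    and yb: "exp (- a) \<le> (\<Sum>c\<in>cfg D (Suc N). R c * (\<Prod>k<Suc N. lam (c k)))"
  shows "B * (\<Sum>c\<in>cfg D (Suc N). R c * (\<Prod>k<N. lam (c k)))
     \<le> (\<Sum>c\<in>cfg D (Suc N). R c * ((\<Prod>k<N. lam (c k)) * (if c N = i0 then 1 else 0)))"
proof -
  define C where "C = cfg D (Suc N)"
  define n where "n = real (Suc N)"
  define p where "p = (\<Sum>c\<in>C. R c * (\<Prod>k<N. lam (c k)))"
  define f where "f = (\<Sum>c\<in>C. R c * ((\<Prod>k<N. lam (c k)) * (if c N = i0 then 1 else 0)))"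
  define W where "W = (\<lambda>j c. \<Prod>k\<in>{..<Suc N} - {j}. lam (c k))"
  define Lam where "Lam = (\<lambda>c. \<Prod>k<Suc N. lam (c k))"
  have finC: "finite C" unfolding C_def by (rule finite_PiE) auto
  have cr: "\<And>c k. c \<in> C \<Longrightarrow> k < Suc N \<Longrightarrow> c k < D" unfolding C_def by (auto simp: PiE_iff)
  have lamr: "\<And>i. i < D \<Longrightarrow> lam i = 1 \<or> (\<tau> \<le> lam i \<and> lam i \<le> \<beta>)" using lr i0 by metis
  have lampos: "\<And>i. i < D \<Longrightarrow> 0 < lam i" using lamr tb by fastforce
  have lamtau: "\<And>i. i < D \<Longrightarrow> \<tau> \<le> lam i" using lamr tb by fastforce
  have pass: "\<And>i. i < D \<Longrightarrow> (i = i0) = (lam i = 1)" using lr i0 tb by fastforce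
  have Lpos: "\<And>c. c \<in> C \<Longrightarrow> 0 < Lam c" unfolding Lam_def using cr lampos by (intro prod_pos) auto
  have bpos: "0 < b" unfolding b using tb by simp
  have m1: "0 < \<beta> * ln (1 / \<beta>)" using tb by (intro mult_pos_pos) auto
  have m2: "0 < \<tau> * ln (1 / \<tau>)" using tb by (intro mult_pos_pos) auto
  define m where "m = min (\<beta> * ln (1 / \<beta>)) (\<tau> * ln (1 / \<tau>))"
  have mpos: "0 < m" unfolding m_def using m1 m2 by simp
  have hm: "h = 1 / m" unfolding h m_def ..
  have hpos: "0 < h" using mpos hm by simp
  have hx: "\<forall>y. \<tau> \<le> y \<and> y \<le> \<beta> \<longrightarrow> 1 \<le> h * (y * ln (1 / y))"
  proof (intro allI impI)
    fix y assume y: "\<tau> \<le> y \<and> y \<le> \<beta>"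
    have "m \<le> y * ln (1 / y)" unfolding m_def using xlnx_min[of \<tau> y \<beta>] tb y by (simp add: min.commute)
    hence "h * m \<le> h * (y * ln (1 / y))" using hpos by (intro mult_left_mono) auto
    thus "1 \<le> h * (y * ln (1 / y))" using mpos hm by simp
  qed
  have hb: "1 / b \<le> h"
  proof -
    have "m \<le> \<beta> * b" unfolding m_def b by simp
    also have "\<dots> \<le> b" using tb bpos by simp
    finally show ?thesis using mpos hm by (simp add: frac_le)
  qed
  have n0: "0 < n" unfolding n_def by simp
  have den: "n \<le> n - a / b + h * a"
  proof -
    have "a * (1 / b) \<le> a * h" using hb a by (intro mult_left_mono) auto
    hence "a / b \<le> h * a" by (simp add: mult.commute)
    thus ?thesis by simp
  qed
  have den0: "0 < n - a / b + h * a" using den n0 by linarith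
  have f0: "0 \<le> f" unfolding f_def using Rnn cr lampos
    by (intro sum_nonneg mult_nonneg_nonneg prod_nonneg) (auto simp: C_def less_imp_le less_Suc_eq)
  have p0: "0 \<le> p" unfolding p_def using Rnn cr lampos
    by (intro sum_nonneg mult_nonneg_nonneg prod_nonneg) (auto simp: C_def less_imp_le less_Suc_eq)
  show ?thesis
  proof (cases "B \<le> 0")
    case True
    hence "B * p \<le> 0" using p0 by (simp add: mult_nonpos_nonneg)
    thus ?thesis using f0 unfolding p_def f_def C_def by linarith
  next
    case False
    hence B0: "0 \<le> B" by simp
    have B1: "B \<le> 1" unfolding Bdef n_def[symmetric] using den0 a hpos
      by (simp add: divide_le_eq)
    define c0 where "c0 = (1 - B) / b + B * h"
    have c0pos: "0 \<le> c0" unfolding c0_def using B0 B1 bpos hpos by simp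
    define d where "d = n - a / b + h * a"
    have d0: "0 < d" unfolding d_def by (rule den0)
    have Bd: "B * d = n - a / b" unfolding Bdef n_def[symmetric] d_def[symmetric] using d0 by simp
    have "(1 - B) * d = d - B * d" by (simp add: algebra_simps)
    hence Bd1: "(1 - B) * d = h * a" unfolding Bd by (simp add: d_def)
    have "c0 * a * d = ((1 - B) * d) * a / b + (B * d) * h * a"
      unfolding c0_def by (simp add: algebra_simps add_divide_distrib)
    also have "\<dots> = h * a * n" unfolding Bd Bd1 using bpos by (simp add: algebra_simps)
    also have "\<dots> = n * ((1 - B) * d)" unfolding Bd1 by (simp add: mult_ac)
    also have "\<dots> = n * (1 - B) * d" by (simp add: mult.assoc)
    finally have key: "n * (1 - B) = c0 * a" using d0 by simp
    define ind where "ind = (\<lambda>(j::nat) (c::nat \<Rightarrow> nat). if c j = i0 then 1 else (0::real))"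
    have WL: "\<And>c j. c \<in> C \<Longrightarrow> j < Suc N \<Longrightarrow> W j c = Lam c / lam (c j)"
    proof -
      fix c j assume c: "c \<in> C" and j: "j < Suc N"
      have "Lam c = lam (c j) * W j c" unfolding Lam_def W_def
        by (rule prod.remove) (use j in auto)
      thus "W j c = Lam c / lam (c j)" using lampos[OF cr[OF c j]] by (simp add: field_simps)
    qed
    have psym: "\<And>j. j < Suc N \<Longrightarrow> p = (\<Sum>c\<in>C. R c * W j c)"
    proof -
      fix j assume j: "j < Suc N"
      have "p = (\<Sum>c\<in>C. R c * (\<Prod>k<N. lam ((c \<circ> Transposition.transpose j N) k)))"
        unfolding p_def C_def by (rule sym_sum[OF j]) (use Rsym j in blast)
      also have "\<dots> = (\<Sum>c\<in>C. R c * W j c)" unfolding W_def by (simp only: prod_swap[OF j])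
      finally show "p = (\<Sum>c\<in>C. R c * W j c)" .
    qed
    have fsym: "\<And>j. j < Suc N \<Longrightarrow> f = (\<Sum>c\<in>C. R c * (W j c * ind j c))"
    proof -
      fix j assume j: "j < Suc N"
      have "f = (\<Sum>c\<in>C. R c * ((\<Prod>k<N. lam ((c \<circ> Transposition.transpose j N) k))
                 * (if (c \<circ> Transposition.transpose j N) N = i0 then 1 else 0)))"
        unfolding f_def C_def by (rule sym_sum[OF j, where G = "\<lambda>c. (\<Prod>k<N. lam (c k)) * (if c N = i0 then 1 else 0)"]) (use Rsym j in blast)
      also have "\<dots> = (\<Sum>c\<in>C. R c * (W j c * ind j c))" unfolding W_def ind_def by (simp only: prod_swap[OF j]) simp
      finally show "f = (\<Sum>c\<in>C. R c * (W j c * ind j c))" .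
    qed
    define P where "P = (\<lambda>c. \<Sum>j<Suc N. W j c)"
    define F where "F = (\<lambda>c. \<Sum>j<Suc N. W j c * ind j c)"
    have np: "n * p = (\<Sum>c\<in>C. R c * P c)"
    proof -
      have "n * p = (\<Sum>j<Suc N. p)" unfolding n_def by simp
      also have "\<dots> = (\<Sum>j<Suc N. \<Sum>c\<in>C. R c * W j c)" using psym by (intro sum.cong refl) auto
      also have "\<dots> = (\<Sum>c\<in>C. R c * P c)" unfolding P_def by (subst sum.swap) (simp only: sum_distrib_left)
      finally show ?thesis .
    qed
    have nf: "n * f = (\<Sum>c\<in>C. R c * F c)"
    proof -
      have "n * f = (\<Sum>j<Suc N. f)" unfolding n_def by simp
      also have "\<dots> = (\<Sum>j<Suc N. \<Sum>c\<in>C. R c * (W j c * ind j c))" using fsym by (intro sum.cong refl) auto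
      also have "\<dots> = (\<Sum>c\<in>C. R c * F c)" unfolding F_def by (subst sum.swap) (simp only: sum_distrib_left)
      finally show ?thesis .
    qed
    have percfg: "\<And>c. c \<in> C \<Longrightarrow> c0 * (Lam c * (a + ln (Lam c))) \<le> F c - B * P c"
    proof -
      fix c assume c: "c \<in> C"
      have L0: "0 < Lam c" by (rule Lpos[OF c])
      have slot: "\<And>j. j < Suc N \<Longrightarrow> Lam c * ((1 - B) - c0 * ln (1 / lam (c j))) \<le> W j c * ind j c - B * W j c"
      proof -
        fix j assume j: "j < Suc N"
        have cj: "c j < D" by (rule cr[OF c j])
        have "ind j c = (if lam (c j) = 1 then 1 else 0)" unfolding ind_def using pass[OF cj] by simp
        thus "Lam c * ((1 - B) - c0 * ln (1 / lam (c j))) \<le> W j c * ind j c - B * W j c"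
          unfolding WL[OF c j]
          using slot_ineq[OF B0 B1 b bpos hx c0_def L0 tb(1) lamr[OF cj] tb(3)] by simp
      qed
      have lnL: "(\<Sum>j<Suc N. ln (1 / lam (c j))) = - ln (Lam c)"
      proof -
        have "(\<Sum>j<Suc N. ln (1 / lam (c j))) = (\<Sum>j<Suc N. - ln (lam (c j)))"
          using lampos cr[OF c] by (intro sum.cong refl) (simp add: ln_div)
        also have "\<dots> = - ln (Lam c)" unfolding Lam_def
          using lampos cr[OF c] by (subst ln_prod) (auto simp: sum_negf, metis less_irrefl)
        finally show ?thesis .
      qed
      have "(\<Sum>j<Suc N. Lam c * ((1 - B) - c0 * ln (1 / lam (c j)))) = Lam c * (n * (1 - B) - c0 * (\<Sum>j<Suc N. ln (1 / lam (c j))))"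
        unfolding n_def by (simp add: sum_distrib_left sum_subtractf algebra_simps)
      also have "\<dots> = c0 * (Lam c * (a + ln (Lam c)))" unfolding lnL key by (simp add: algebra_simps)
      finally have eq: "(\<Sum>j<Suc N. Lam c * ((1 - B) - c0 * ln (1 / lam (c j)))) = c0 * (Lam c * (a + ln (Lam c)))" .
      have "(\<Sum>j<Suc N. Lam c * ((1 - B) - c0 * ln (1 / lam (c j)))) \<le> (\<Sum>j<Suc N. W j c * ind j c - B * W j c)"
        using slot by (intro sum_mono) auto
      also have "\<dots> = F c - B * P c" unfolding F_def P_def by (simp only: sum_subtractf sum_distrib_left)
      finally show "c0 * (Lam c * (a + ln (Lam c))) \<le> F c - B * P c" using eq by simp
    qed
    have "0 \<le> (\<Sum>c\<in>C. R c * (Lam c * (a + ln (Lam c))))"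
      by (rule tangent_sum[OF finC]) (use Rnn Rsum Lpos yb in \<open>auto simp: C_def Lam_def\<close>)
    hence "0 \<le> c0 * (\<Sum>c\<in>C. R c * (Lam c * (a + ln (Lam c))))" using c0pos by simp
    also have "\<dots> = (\<Sum>c\<in>C. R c * (c0 * (Lam c * (a + ln (Lam c)))))" by (simp add: sum_distrib_left mult_ac)
    also have "\<dots> \<le> (\<Sum>c\<in>C. R c * (F c - B * P c))"
      using percfg Rnn unfolding C_def by (intro sum_mono mult_left_mono) auto
    also have "\<dots> = (\<Sum>c\<in>C. R c * F c - B * (R c * P c))" by (intro sum.cong refl) (simp add: algebra_simps)
    also have "\<dots> = n * f - B * (n * p)" unfolding np nf by (simp only: sum_subtractf sum_distrib_left)
    finally have "B * p \<le> f" using n0 by (simp add: algebra_simps)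
    thus ?thesis unfolding p_def f_def C_def .
  qed
qed

lemma abstract_bounds:
  fixes R :: "(nat \<Rightarrow> nat) \<Rightarrow> real" and lam :: "nat \<Rightarrow> real" and \<tau> :: real
  assumes i0: "lam i0 = 1" and lr: "\<forall>i<D. i \<noteq> i0 \<longrightarrow> \<tau> \<le> lam i \<and> lam i \<le> \<beta>"
    and tb: "0 < \<tau>" "\<tau> \<le> 1"
    and Rnn: "\<forall>c\<in>cfg D (Suc N). 0 \<le> R c"
  shows "\<tau> * (\<Sum>c\<in>cfg D (Suc N). R c * (\<Prod>k<N. lam (c k))) \<le> (\<Sum>c\<in>cfg D (Suc N). R c * (\<Prod>k<Suc N. lam (c k)))"
    and "(\<Sum>c\<in>cfg D (Suc N). R c * ((\<Prod>k<N. lam (c k)) * (if c N = i0 then 1 else 0))) \<le> (\<Sum>c\<in>cfg D (Suc N). R c * (\<Prod>k<Suc N. lam (c k)))"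
    and "(\<Sum>c\<in>cfg D (Suc N). R c * ((\<Prod>k<N. lam (c k)) * (if c N = i0 then 1 else 0))) \<le> (\<Sum>c\<in>cfg D (Suc N). R c * (\<Prod>k<N. lam (c k)))"
proof -
  have cr: "\<And>c k. c \<in> cfg D (Suc N) \<Longrightarrow> k < Suc N \<Longrightarrow> c k < D" by (auto simp: PiE_iff)
  have lamtau: "\<And>i. i < D \<Longrightarrow> \<tau> \<le> lam i" using lr i0 tb by (metis)
  have lam0: "\<And>i. i < D \<Longrightarrow> 0 \<le> lam i" using lamtau tb by (meson less_imp_le order_trans)
  have P0: "\<And>c. c \<in> cfg D (Suc N) \<Longrightarrow> 0 \<le> (\<Prod>k<N. lam (c k))"
    using lam0 cr by (intro prod_nonneg) auto
  show "\<tau> * (\<Sum>c\<in>cfg D (Suc N). R c * (\<Prod>k<N. lam (c k))) \<le> (\<Sum>c\<in>cfg D (Suc N). R c * (\<Prod>k<Suc N. lam (c k)))"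
    unfolding sum_distrib_left
  proof (rule sum_mono)
    fix c assume c: "c \<in> cfg D (Suc N)"
    have "(\<Prod>k<N. lam (c k)) * \<tau> \<le> (\<Prod>k<N. lam (c k)) * lam (c N)"
      using P0[OF c] lamtau[OF cr[OF c]] by (intro mult_left_mono) auto
    note X = this
    have "R c * ((\<Prod>k<N. lam (c k)) * \<tau>) \<le> R c * ((\<Prod>k<N. lam (c k)) * lam (c N))"
      using mult_left_mono[OF X, of "R c"] Rnn c by auto
    thus "\<tau> * (R c * (\<Prod>k<N. lam (c k))) \<le> R c * (\<Prod>k<Suc N. lam (c k))"
      by (simp add: mult_ac)
  qed
  show "(\<Sum>c\<in>cfg D (Suc N). R c * ((\<Prod>k<N. lam (c k)) * (if c N = i0 then 1 else 0))) \<le> (\<Sum>c\<in>cfg D (Suc N). R c * (\<Prod>k<Suc N. lam (c k)))"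
  proof (rule sum_mono)
    fix c assume c: "c \<in> cfg D (Suc N)"
    have "(\<Prod>k<N. lam (c k)) * (if c N = i0 then 1 else 0) \<le> (\<Prod>k<N. lam (c k)) * lam (c N)"
      using P0[OF c] lam0[OF cr[OF c]] i0 by auto
    thus "R c * ((\<Prod>k<N. lam (c k)) * (if c N = i0 then 1 else 0)) \<le> R c * (\<Prod>k<Suc N. lam (c k))"
      using Rnn c by (simp add: mult_left_mono)
  qed
  show "(\<Sum>c\<in>cfg D (Suc N). R c * ((\<Prod>k<N. lam (c k)) * (if c N = i0 then 1 else 0))) \<le> (\<Sum>c\<in>cfg D (Suc N). R c * (\<Prod>k<N. lam (c k)))"
  proof (rule sum_mono)
    fix c assume c: "c \<in> cfg D (Suc N)"
    have "(\<Prod>k<N. lam (c k)) * (if c N = i0 then 1 else 0) \<le> (\<Prod>k<N. lam (c k))"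
      using P0[OF c] by auto
    thus "R c * ((\<Prod>k<N. lam (c k)) * (if c N = i0 then 1 else 0)) \<le> R c * (\<Prod>k<N. lam (c k))"
      using Rnn c by (simp add: mult_left_mono)
  qed
qed

lemma Re_complex_of_real_mult: "Re (complex_of_real r * z) = r * Re z"
  by simp

lemma state_data:
  fixes lam :: "nat \<Rightarrow> real"
  assumes D0: "0 < D" and adm: "admissible D N \<rho>"
    and EO: "\<forall>x<D. \<forall>y<D. \<Omega> $$ (x, y) = (\<Sum>i<D. complex_of_real (lam i) * (cs i $ x * cnj (cs i $ y)))"
    and compl: "\<forall>x<D. \<forall>y<D. (\<Sum>i<D. cs i $ x * cnj (cs i $ y)) = (if x = y then 1 else 0)"
    and EP: "\<forall>x<D. \<forall>y<D. proj D \<Psi> $$ (x, y) = (\<Sum>i<D. (if i = i0 then 1 else 0) * (cs i $ x * cnj (cs i $ y)))"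
  shows "(\<forall>c\<in>cfg D (Suc N). 0 \<le> Re (rc D (Suc N) cs \<rho> c))
    \<and> (\<Sum>c\<in>cfg D (Suc N). Re (rc D (Suc N) cs \<rho> c)) = 1
    \<and> (\<forall>j<Suc N. \<forall>c\<in>cfg D (Suc N). Re (rc D (Suc N) cs \<rho> (c \<circ> Transposition.transpose j N)) = Re (rc D (Suc N) cs \<rho> c))
    \<and> p_val D N \<Omega> \<rho> = (\<Sum>c\<in>cfg D (Suc N). Re (rc D (Suc N) cs \<rho> c) * (\<Prod>k<N. lam (c k)))
    \<and> f_val D N \<Omega> \<Psi> \<rho> = (\<Sum>c\<in>cfg D (Suc N). Re (rc D (Suc N) cs \<rho> c) * ((\<Prod>k<N. lam (c k)) * (if c N = i0 then 1 else 0)))"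
proof -
  have dens: "density_op (D ^ Suc N) \<rho>" and pinv: "perm_invariant D (Suc N) \<rho>"
    using adm unfolding admissible_def by auto
  have psd: "psd_mat (D ^ Suc N) \<rho>" and tr: "mtrace \<rho> = 1" using dens unfolding density_op_def by auto
  have rc: "\<rho> \<in> carrier_mat (D ^ Suc N) (D ^ Suc N)" using psd unfolding psd_mat_def hermitian_mat_def by blast
  have nn: "\<forall>c\<in>cfg D (Suc N). 0 \<le> Re (rc D (Suc N) cs \<rho> c)"
  proof
    fix c
    have "\<forall>v\<in>carrier_vec (D ^ Suc N). 0 \<le> Re ((\<rho> *\<^sub>v v) \<bullet>c v)" using psd unfolding psd_mat_def by blast
    thus "0 \<le> Re (rc D (Suc N) cs \<rho> c)" unfolding rc_def using vc_carrier by blast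
  qed
  have EI: "\<forall>x<D. \<forall>y<D. 1\<^sub>m D $$ (x, y) = (\<Sum>i<D. (\<lambda>_. 1) i * (cs i $ x * cnj (cs i $ y)))"
    using compl by simp
  have sum1: "(\<Sum>c\<in>cfg D (Suc N). Re (rc D (Suc N) cs \<rho> c)) = 1"
    using sum_rc[OF D0 compl rc] tr by (simp flip: Re_sum)
  have sym: "\<forall>j<Suc N. \<forall>c\<in>cfg D (Suc N). Re (rc D (Suc N) cs \<rho> (c \<circ> Transposition.transpose j N)) = Re (rc D (Suc N) cs \<rho> c)"
  proof (intro allI impI ballI)
    fix j c assume j: "j < Suc N"
    have "Transposition.transpose j N permutes {..<Suc N}" using j by (intro permutes_swap_id) auto
    thus "Re (rc D (Suc N) cs \<rho> (c \<circ> Transposition.transpose j N)) = Re (rc D (Suc N) cs \<rho> c)"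
      using rc_perm[OF D0 _ pinv rc] by simp
  qed
  have pv: "p_val D N \<Omega> \<rho> = (\<Sum>c\<in>cfg D (Suc N). Re (rc D (Suc N) cs \<rho> c) * (\<Prod>k<N. lam (c k)))"
  proof -
    have "p_val D N \<Omega> \<rho> = Re (\<Sum>c\<in>cfg D (Suc N). ((\<Prod>k<N. complex_of_real (lam (c k))) * 1) * rc D (Suc N) cs \<rho> c)"
      unfolding p_val_def using trace_expand[OF D0 EO EI rc] by simp
    also have "\<dots> = (\<Sum>c\<in>cfg D (Suc N). Re (rc D (Suc N) cs \<rho> c) * (\<Prod>k<N. lam (c k)))"
      by (simp add: Re_sum mult.commute flip: of_real_prod)
    finally show ?thesis .
  qed
  have fv: "f_val D N \<Omega> \<Psi> \<rho> = (\<Sum>c\<in>cfg D (Suc N). Re (rc D (Suc N) cs \<rho> c) * ((\<Prod>k<N. lam (c k)) * (if c N = i0 then 1 else 0)))"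
  proof -
    have "f_val D N \<Omega> \<Psi> \<rho> = Re (\<Sum>c\<in>cfg D (Suc N). ((\<Prod>k<N. complex_of_real (lam (c k))) * (if c N = i0 then 1 else 0)) * rc D (Suc N) cs \<rho> c)"
      unfolding f_val_def using trace_expand[OF D0 EO EP rc] by simp
    also have "\<dots> = Re (\<Sum>c\<in>cfg D (Suc N). complex_of_real ((\<Prod>k<N. lam (c k)) * (if c N = i0 then 1 else 0)) * rc D (Suc N) cs \<rho> c)"
      by (intro arg_cong[where f = Re] sum.cong refl) (simp add: of_real_prod)
    also have "\<dots> = (\<Sum>c\<in>cfg D (Suc N). Re (rc D (Suc N) cs \<rho> c) * ((\<Prod>k<N. lam (c k)) * (if c N = i0 then 1 else 0)))"
      unfolding Re_sum by (intro sum.cong refl) (simp only: Re_complex_of_real_mult mult.commute[of "Re _"])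
    finally show ?thesis .
  qed
  show ?thesis using nn sum1 sym pv fv by blast
qed

theorem lemma9:
  fixes D N :: nat and \<Omega> :: "complex mat" and \<Psi> :: "complex vec"
    and \<delta> f \<beta> \<tau> h :: real
  assumes "D \<ge> 2" and "N \<ge> 1"
    and "0 < \<delta>" "\<delta> \<le> 1" and "0 < f" "f \<le> 1"
    and "verification_operator D \<Omega> \<Psi>" and "pd_mat D \<Omega>"
    and "eigenvalue \<Omega> (complex_of_real \<beta>)" and "\<beta> \<noteq> 1"
    and "\<forall>\<mu>::real. eigenvalue \<Omega> (complex_of_real \<mu>) \<and> \<mu> \<noteq> 1 \<longrightarrow> \<mu> \<le> \<beta>"
    and "eigenvalue \<Omega> (complex_of_real \<tau>)"
    and "\<forall>\<mu>::real. eigenvalue \<Omega> (complex_of_real \<mu>) \<longrightarrow> \<tau> \<le> \<mu>"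
    and "0 < \<tau>" "\<tau> \<le> \<beta>" "\<beta> < 1"
    and "h = 1 / min (\<beta> * ln (1 / \<beta>)) (\<tau> * ln (1 / \<tau>))"
  shows "(\<forall>\<rho>. admissible D N \<rho> \<and> p_val D N \<Omega> \<rho> \<ge> \<delta> \<longrightarrow>
            f_val D N \<Omega> \<Psi> \<rho> / p_val D N \<Omega> \<rho> \<ge>
              (real N + 1 - ln (\<tau> * \<delta>) / ln \<beta>) /
              (real N + 1 - ln (\<tau> * \<delta>) / ln \<beta> - h * ln (\<tau> * \<delta>)))
       \<and> (\<forall>\<rho>. admissible D N \<rho> \<and> f_val D N \<Omega> \<Psi> \<rho> \<ge> f \<longrightarrow>
            f_val D N \<Omega> \<Psi> \<rho> / p_val D N \<Omega> \<rho> \<ge>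
              (real N + 1 - ln f / ln \<beta>) /
              (real N + 1 - ln f / ln \<beta> - h * ln f))"
proof -
  have D0: "0 < D" using assms(1) by simp
  have Pc: "\<Psi> \<in> carrier_vec D" and PP: "\<Psi> \<bullet>c \<Psi> = 1" and psdO: "psd_mat D \<Omega>"
    and OP: "\<Omega> *\<^sub>v \<Psi> = \<Psi>" and uniq: "\<forall>v \<in> carrier_vec D. \<Omega> *\<^sub>v v = v \<longrightarrow> (\<exists>c. v = c \<cdot>\<^sub>v \<Psi>)"
    using assms(7) unfolding verification_operator_def by auto
  have HO: "hermitian_mat D \<Omega>" using psdO unfolding psd_mat_def by blast
  have Oc: "\<Omega> \<in> carrier_mat D D" using HO unfolding hermitian_mat_def by blast
  obtain cs and lam :: "nat \<Rightarrow> real" where cs: "\<forall>i<D. cs i \<in> carrier_vec D"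
    and on: "\<forall>i<D. \<forall>j<D. cs i \<bullet>c cs j = (if i = j then 1 else 0)"
    and ev: "\<forall>i<D. \<Omega> *\<^sub>v cs i = complex_of_real (lam i) \<cdot>\<^sub>v cs i"
    and compl: "\<forall>x<D. \<forall>y<D. (\<Sum>i<D. cs i $ x * cnj (cs i $ y)) = (if x = y then 1 else 0)"
    and EO: "\<forall>x<D. \<forall>y<D. \<Omega> $$ (x, y) = (\<Sum>i<D. complex_of_real (lam i) * (cs i $ x * cnj (cs i $ y)))"
    using spectral_decomp[OF Oc HO] by blast
  have csnz: "\<And>i. i < D \<Longrightarrow> cs i \<noteq> 0\<^sub>v D"
  proof
    fix i assume i: "i < D" and z: "cs i = 0\<^sub>v D"
    have "cs i \<bullet>c cs i = 1" using on i by simp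
    thus False using z by simp
  qed
  have eig: "\<And>i. i < D \<Longrightarrow> eigenvalue \<Omega> (complex_of_real (lam i))"
    unfolding eigenvalue_def eigenvector_def using cs csnz ev Oc by auto
  have lamtau: "\<And>i. i < D \<Longrightarrow> \<tau> \<le> lam i" using eig assms(13) by blast
  have lambeta: "\<And>i. i < D \<Longrightarrow> lam i \<noteq> 1 \<Longrightarrow> lam i \<le> \<beta>" using eig assms(11) by blast
  have coef: "\<And>j. j < D \<Longrightarrow> (complex_of_real (lam j) - 1) * (\<Psi> \<bullet>c cs j) = 0"
  proof -
    fix j assume j: "j < D"
    have "\<Psi> \<bullet>c cs j = (\<Omega> *\<^sub>v \<Psi>) \<bullet>c cs j" using OP by simp
    also have "\<dots> = \<Psi> \<bullet>c (\<Omega> *\<^sub>v cs j)" using hermitian_cscalar[OF Oc HO Pc] cs j by blast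
    also have "\<dots> = complex_of_real (lam j) * (\<Psi> \<bullet>c cs j)"
      using ev j cscalar_smult_right[OF Pc, of "cs j" "complex_of_real (lam j)"] cs by simp
    finally show "(complex_of_real (lam j) - 1) * (\<Psi> \<bullet>c cs j) = 0" by (simp add: algebra_simps)
  qed
  have expand: "\<And>x. x < D \<Longrightarrow> \<Psi> $ x = (\<Sum>i<D. cs i $ x * (\<Psi> \<bullet>c cs i))"
  proof -
    fix x assume x: "x < D"
    have "(\<Sum>i<D. cs i $ x * (\<Psi> \<bullet>c cs i)) = (\<Sum>i<D. cs i $ x * (\<Sum>y<D. \<Psi> $ y * cnj (cs i $ y)))"
      using cs Pc by (intro sum.cong refl) (simp add: cscalar_sum)
    also have "\<dots> = (\<Sum>y<D. \<Psi> $ y * (\<Sum>i<D. cs i $ x * cnj (cs i $ y)))"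
      by (simp add: sum_distrib_left mult_ac) (rule sum.swap)
    also have "\<dots> = (\<Sum>y<D. \<Psi> $ y * (if x = y then 1 else 0))"
      using compl x by (intro sum.cong refl) auto
    also have "\<dots> = \<Psi> $ x" using x by (simp add: if_distrib cong: if_cong)
    finally show "\<Psi> $ x = (\<Sum>i<D. cs i $ x * (\<Psi> \<bullet>c cs i))" ..
  qed
  obtain i0 where i0: "i0 < D" "lam i0 = 1"
  proof (rule ccontr)
    assume "\<not> thesis"
    hence ne: "\<forall>i<D. lam i \<noteq> 1" using that by blast
    have "\<forall>i<D. \<Psi> \<bullet>c cs i = 0"
    proof (intro allI impI)
      fix i assume i: "i < D"
      have "complex_of_real (lam i) - 1 \<noteq> 0" using ne i
        by (metis eq_iff_diff_eq_0 of_real_1 of_real_eq_iff)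
      thus "\<Psi> \<bullet>c cs i = 0" using coef[OF i] by simp
    qed
    hence "\<forall>x<D. \<Psi> $ x = 0" using expand by simp
    hence "\<Psi> \<bullet>c \<Psi> = 0" using Pc by (simp add: cscalar_sum)
    thus False using PP by simp
  qed
  have ev1: "\<And>i. i < D \<Longrightarrow> lam i = 1 \<Longrightarrow> \<exists>c. cs i = c \<cdot>\<^sub>v \<Psi>"
  proof -
    fix i assume i: "i < D" and l: "lam i = 1"
    have "\<Omega> *\<^sub>v cs i = cs i" using ev i l by simp
    thus "\<exists>c. cs i = c \<cdot>\<^sub>v \<Psi>" using uniq cs i by blast
  qed
  obtain c' where c': "cs i0 = c' \<cdot>\<^sub>v \<Psi>" using ev1[OF i0] by blast
  have cc': "c' * cnj c' = 1"
  proof -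
    have "cs i0 \<bullet>c cs i0 = 1" using on i0 by simp
    thus ?thesis unfolding c' using Pc PP
      by (simp add: cscalar_smult_left[of _ D] cscalar_smult_right[of _ D] mult_ac)
  qed
  have uniq0: "\<And>i. i < D \<Longrightarrow> i \<noteq> i0 \<Longrightarrow> lam i \<noteq> 1"
  proof
    fix i assume i: "i < D" "i \<noteq> i0" and l: "lam i = 1"
    obtain c where c: "cs i = c \<cdot>\<^sub>v \<Psi>" using ev1[OF i(1) l] by blast
    have "cs i \<bullet>c cs i = 1" using on i by simp
    hence "c * cnj c = 1" unfolding c using Pc PP
      by (simp add: cscalar_smult_left[of _ D] cscalar_smult_right[of _ D] mult_ac)
    moreover have "cs i \<bullet>c cs i0 = 0" using on i i0 by simp
    hence "c * cnj c' = 0" unfolding c c' using Pc PP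
      by (simp add: cscalar_smult_left[of _ D] cscalar_smult_right[of _ D] mult_ac)
    ultimately show False using cc' by auto
  qed
  have lr: "\<forall>i<D. i \<noteq> i0 \<longrightarrow> \<tau> \<le> lam i \<and> lam i \<le> \<beta>"
    using lamtau lambeta uniq0 by blast
  have EP: "\<forall>x<D. \<forall>y<D. proj D \<Psi> $$ (x, y) = (\<Sum>i<D. (if i = i0 then 1 else 0) * (cs i $ x * cnj (cs i $ y)))"
  proof (intro allI impI)
    fix x y assume xy: "x < D" "y < D"
    have "(\<Sum>i<D. (if i = i0 then 1 else 0) * (cs i $ x * cnj (cs i $ y))) = cs i0 $ x * cnj (cs i0 $ y)"
    proof -
      have "(\<Sum>i<D. (if i = i0 then 1 else 0) * (cs i $ x * cnj (cs i $ y))) = (\<Sum>i<D. if i = i0 then cs i $ x * cnj (cs i $ y) else 0)"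
        by (intro sum.cong refl) simp
      also have "\<dots> = cs i0 $ x * cnj (cs i0 $ y)" using i0 by simp
      finally show ?thesis .
    qed
    also have "\<dots> = (c' * cnj c') * (\<Psi> $ x * cnj (\<Psi> $ y))" unfolding c' using xy Pc by simp
    also have "\<dots> = proj D \<Psi> $$ (x, y)" using xy cc' by (simp add: proj_def)
    finally show "proj D \<Psi> $$ (x, y) = (\<Sum>i<D. (if i = i0 then 1 else 0) * (cs i $ x * cnj (cs i $ y)))" ..
  qed
  have tb: "0 < \<tau>" "\<tau> \<le> \<beta>" "\<beta> < 1" using assms(14,15,16) by auto
  define b where "b = ln (1 / \<beta>)"
  have lnb: "b = - ln \<beta>" unfolding b_def using tb ln_div[of 1 \<beta>] by simp
  define yb where "yb = (\<lambda>\<rho>. (\<Sum>c\<in>cfg D (Suc N). Re (rc D (Suc N) cs \<rho> c) * (\<Prod>k<Suc N. lam (c k))))"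
  have core: "\<And>\<rho> a. admissible D N \<rho> \<Longrightarrow> 0 \<le> a \<Longrightarrow> exp (- a) \<le> yb \<rho> \<Longrightarrow>
     ((real (Suc N) - a / b) / (real (Suc N) - a / b + h * a)) * p_val D N \<Omega> \<rho> \<le> f_val D N \<Omega> \<Psi> \<rho>"
  proof -
    fix \<rho> a assume adm: "admissible D N \<rho>" and a: "0 \<le> a" and y: "exp (- a) \<le> yb \<rho>"
    note sd = state_data[OF D0 adm EO compl EP]
    show "((real (Suc N) - a / b) / (real (Suc N) - a / b + h * a)) * p_val D N \<Omega> \<rho> \<le> f_val D N \<Omega> \<Psi> \<rho>"
      using main_abstract[OF D0 i0 lr tb, of N "\<lambda>c. Re (rc D (Suc N) cs \<rho> c)" b h a, OF _ _ _ b_def assms(17) a refl]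
        sd y unfolding yb_def by simp
  qed
  have bnds: "\<And>\<rho>. admissible D N \<rho> \<Longrightarrow> \<tau> * p_val D N \<Omega> \<rho> \<le> yb \<rho> \<and> f_val D N \<Omega> \<Psi> \<rho> \<le> yb \<rho>
      \<and> f_val D N \<Omega> \<Psi> \<rho> \<le> p_val D N \<Omega> \<rho>"
  proof -
    fix \<rho> assume adm: "admissible D N \<rho>"
    note sd = state_data[OF D0 adm EO compl EP]
    have t1: "\<tau> \<le> 1" using tb by simp
    show "\<tau> * p_val D N \<Omega> \<rho> \<le> yb \<rho> \<and> f_val D N \<Omega> \<Psi> \<rho> \<le> yb \<rho> \<and> f_val D N \<Omega> \<Psi> \<rho> \<le> p_val D N \<Omega> \<rho>"
      using abstract_bounds[OF i0(2) lr tb(1) t1, of N "\<lambda>c. Re (rc D (Suc N) cs \<rho> c)"] sd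
      unfolding yb_def by simp
  qed
  have Bform: "\<And>x. ((real (Suc N) - (- ln x) / b) / (real (Suc N) - (- ln x) / b + h * (- ln x)))
      = (real N + 1 - ln x / ln \<beta>) / (real N + 1 - ln x / ln \<beta> - h * ln x)"
    unfolding lnb by (simp add: add.commute)
  show ?thesis
  proof (intro conjI allI impI; elim conjE)
    fix \<rho> assume adm: "admissible D N \<rho>" and pd: "\<delta> \<le> p_val D N \<Omega> \<rho>"
    have td: "0 < \<tau> * \<delta>" using tb assms(3) by simp
    have td1: "\<tau> * \<delta> \<le> 1" using tb assms(3,4) by (intro mult_le_one) auto
    have a: "0 \<le> - ln (\<tau> * \<delta>)" using td td1 by simp
    have "exp (- (- ln (\<tau> * \<delta>))) = \<tau> * \<delta>" using td by simp
    also have "\<dots> \<le> \<tau> * p_val D N \<Omega> \<rho>" using pd tb by simp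
    also have "\<dots> \<le> yb \<rho>" using bnds[OF adm] by simp
    finally have y: "exp (- (- ln (\<tau> * \<delta>))) \<le> yb \<rho>" .
    have p0: "0 < p_val D N \<Omega> \<rho>" using pd assms(3) by simp
    have "((real N + 1 - ln (\<tau> * \<delta>) / ln \<beta>) / (real N + 1 - ln (\<tau> * \<delta>) / ln \<beta> - h * ln (\<tau> * \<delta>))) * p_val D N \<Omega> \<rho>
        \<le> f_val D N \<Omega> \<Psi> \<rho>"
      using core[OF adm a y] unfolding Bform .
    thus "(real N + 1 - ln (\<tau> * \<delta>) / ln \<beta>) / (real N + 1 - ln (\<tau> * \<delta>) / ln \<beta> - h * ln (\<tau> * \<delta>))
        \<le> f_val D N \<Omega> \<Psi> \<rho> / p_val D N \<Omega> \<rho>"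
      using p0 by (simp add: pos_le_divide_eq)
  next
    fix \<rho> assume adm: "admissible D N \<rho>" and fd: "f \<le> f_val D N \<Omega> \<Psi> \<rho>"
    have a: "0 \<le> - ln f" using assms(5,6) by simp
    have "exp (- (- ln f)) = f" using assms(5) by simp
    also have "\<dots> \<le> yb \<rho>" using fd bnds[OF adm] by linarith
    finally have y: "exp (- (- ln f)) \<le> yb \<rho>" .
    have p0: "0 < p_val D N \<Omega> \<rho>" using fd assms(5) bnds[OF adm] by linarith
    have "((real N + 1 - ln f / ln \<beta>) / (real N + 1 - ln f / ln \<beta> - h * ln f)) * p_val D N \<Omega> \<rho>
        \<le> f_val D N \<Omega> \<Psi> \<rho>"
      using core[OF adm a y] unfolding Bform .
    thus "(real N + 1 - ln f / ln \<beta>) / (real N + 1 - ln f / ln \<beta> - h * ln f)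
        \<le> f_val D N \<Omega> \<Psi> \<rho> / p_val D N \<Omega> \<rho>"
      using p0 by (simp add: pos_le_divide_eq)
  qed
qed

end
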